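(* Let $\Sigma$ be a finite alphabet, let $G_X=(V_X,E_X,L_X)$ and $G_Y=(V_Y,E_Y,L_Y)$ be finite directed graphs with edge labelings $L_X:E_X\to\Sigma$, $L_Y:E_Y\to\Sigma$, neither having parallel edges with the same label, and let $X,Y\subseteq\Sigma^{\mathbb{Z}}$ be the constrained systems they present. Let $P_Y=(\pi_Y,Q_Y)$ be a stationary Markov chain on $G_Y$ whose induced hidden Markov measure $\mu$ on $Y$ is ergodic. Let $E_{X\times Y}=E_X\times E_Y$ and $V_{X\times Y}=V_X\times V_Y$, with $\sigma(e_x,e_y)=(\sigma(e_x),\sigma(e_y))$ and $\tau(e_x,e_y)=(\tau(e_x),\tau(e_y))$. Then $R_0(X,Y,\mu)\le\mathrm{MB}(G_X,G_Y,P_Y)$, where $\mathrm{MB}(G_X,G_Y,P_Y)$ is the optimal value of the linear program: minimize $\sum_{e=(e_x,e_y)\in E_{X\times Y},\ L_X(e_x)\ne L_Y(e_y)}P(e)$ over $P\in\mathbb{R}^{E_{X\times Y}}$ subject to (1) $P(e)\ge0$ for all $e\in E_{X\times Y}$; (2) $\sum_{e\in E_{X\times Y}}P(e)=1$; (3) $\sum_{e'\in E_{X\times Y},\ e'_y=e}P(e')=P_Y(e)$ for all $e\in E_Y$; (4) $\sum_{e\in E_{X\times Y},\ \sigma(e)=v}P(e)=\sum_{e\in E_{X\times Y},\ \tau(e)=v}P(e)$ for all $v\in V_{X\times Y}$; (5) for all $e=(e_x,e_y)\in E_{X\times Y}$: $\sum_{e'\in E_{X\times Y},\ e'_y=e_y,\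 \sigma(e'_x)=\sigma(e_x)}P(e')=Q_Y(e_y)\sum_{e'\in E_{X\times Y},\ \sigma(e'_y)=\sigma(e_y),\ \sigma(e'_x)=\sigma(e_x)}P(e')$.
   Context: For a labeled graph $G$, the constrained system it presents is the set of label sequences of bi-infinite directed paths in $G$. A stationary Markov chain on a finite directed graph $(W,F)$ is a probability measure $P$ on $F$ with $\pi(w):=\sum_{\sigma(e)=w}P(e)=\sum_{\tau(e)=w}P(e)$ and $\pi(w)>0$ for every vertex $w$; $Q(e)=P(e)/\pi(\sigma(e))$; we write $P=(\pi,Q)$. The hidden Markov measure induced on $Y$ by $P_Y$ is the shift-invariant measure with $\mu(\{\mathbf{y}:\mathbf{y}_0^{n-1}=\overline{y}\})=\sum P_Y(e_0)\prod_{i=1}^{n-1}Q_Y(e_i)$, the sum over paths $e_0\cdots e_{n-1}$ in $G_Y$ with label sequence $\overline{y}$. $\mathscr{B}_n(X)$ is the set of length-$n$ words appearing in elements of $X$; $d$ is Hamming distance, $B_r$ the Hamming ball. For $A,C\subseteq\Sigma^n$, a probability measure $\eta$ on $\Sigma^n$ and $\varepsilon>0$: $R_\varepsilon(C,A,\eta)=\min\{r\in\mathbb{Z}_{\ge0}:\eta(A\cap\bigcup_{\overline{x}\in C}B_r(\overline{x}))\ge1-\varepsilon\}$. With $\mu_n$ the marginal of $\mu$ on coordinates $0,\dots,n-1$: $R_\varepsilon(X,Y,\mu)=\liminf_n\frac1nR_\varepsilon(\mathscr{B}_n(X),\mathscr{B}_n(Y),\mu_n)$ and $R_0(X,Y,\mu)=\lim_{\varepsilon\to0}R_\varepsilon(X,Y,\mu)$.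 *)

theory Defs
  imports "HOL-Probability.Probability"
begin

record ('v,'e,'a) lgraph =
  verts :: "'v set"
  edges :: "'e set"
  src   :: "'e \<Rightarrow> 'v"
  tgt   :: "'e \<Rightarrow> 'v"
  lab   :: "'e \<Rightarrow> 'a"

definition wf_lgraph :: "('v,'e,'a) lgraph \<Rightarrow> bool" where
  "wf_lgraph G \<longleftrightarrow> finite (verts G) \<and> finite (edges G)
     \<and> (\<forall>e\<in>edges G. src G e \<in> verts G \<and> tgt G e \<in> verts G)
     \<and> (\<forall>e\<in>edges G. \<forall>e'\<in>edges G.
          src G e = src G e' \<and> tgt G e = tgt G e' \<and> lab G e = lab G e' \<longrightarrow> e = e')"

definition presented :: "('v,'e,'a) lgraph \<Rightarrow> (int \<Rightarrow> 'a) set" where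
  "presented G = {x. \<exists>p :: int \<Rightarrow> 'e. (\<forall>i. p i \<in> edges G)
       \<and> (\<forall>i. tgt G (p i) = src G (p (i + 1))) \<and> (\<forall>i. x i = lab G (p i))}"

definition Bn :: "(int \<Rightarrow> 'a) set \<Rightarrow> nat \<Rightarrow> 'a list set" where
  "Bn X n = {w. length w = n \<and> (\<exists>x\<in>X. \<exists>k::int. w = map (\<lambda>i. x (k + int i)) [0..<n])}"

definition mc_pi :: "('v,'e,'a) lgraph \<Rightarrow> ('e \<Rightarrow> real) \<Rightarrow> 'v \<Rightarrow> real" where
  "mc_pi G P w = (\<Sum>e\<in>{e\<in>edges G. src G e = w}. P e)"

definition mc_Q :: "('v,'e,'a) lgraph \<Rightarrow> ('e \<Rightarrow> real) \<Rightarrow> 'e \<Rightarrow> real" where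
  "mc_Q G P e = P e / mc_pi G P (src G e)"

definition stationary_mc :: "('v,'e,'a) lgraph \<Rightarrow> ('e \<Rightarrow> real) \<Rightarrow> bool" where
  "stationary_mc G P \<longleftrightarrow> (\<forall>e\<in>edges G. P e \<ge> 0) \<and> (\<Sum>e\<in>edges G. P e) = 1
     \<and> (\<forall>w\<in>verts G. (\<Sum>e\<in>{e\<in>edges G. src G e = w}. P e) = (\<Sum>e\<in>{e\<in>edges G. tgt G e = w}. P e)
                    \<and> mc_pi G P w > 0)"

definition gpaths :: "('v,'e,'a) lgraph \<Rightarrow> nat \<Rightarrow> 'e list set" where
  "gpaths G n = {es. length es = n \<and> set es \<subseteq> edges G
      \<and> (\<forall>i. Suc i < n \<longrightarrow> tgt G (es ! i) = src G (es ! Suc i))}"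

definition hmm_cyl :: "('v,'e,'a) lgraph \<Rightarrow> ('e \<Rightarrow> real) \<Rightarrow> 'a list \<Rightarrow> real" where
  "hmm_cyl G P w = (if w = [] then 1 else
     (\<Sum>es\<in>{es\<in>gpaths G (length w). map (lab G) es = w}.
        P (es ! 0) * (\<Prod>i\<in>{1..<length w}. mc_Q G P (es ! i))))"

definition word_at :: "(int \<Rightarrow> 'a) \<Rightarrow> nat \<Rightarrow> 'a list" where
  "word_at x n = map (\<lambda>i. x (int i)) [0..<n]"

definition shift :: "(int \<Rightarrow> 'a) \<Rightarrow> (int \<Rightarrow> 'a)" where
  "shift x = (\<lambda>i. x (i + 1))"

definition seq_space :: "(int \<Rightarrow> 'a) measure" where
  "seq_space = PiM UNIV (\<lambda>_::int. count_space (UNIV :: 'a set))"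

definition hidden_markov_measure ::
  "('v,'e,'a) lgraph \<Rightarrow> ('e \<Rightarrow> real) \<Rightarrow> (int \<Rightarrow> 'a) measure \<Rightarrow> bool" where
  "hidden_markov_measure G P \<mu> \<longleftrightarrow> prob_space \<mu> \<and> sets \<mu> = sets seq_space
     \<and> (\<forall>A\<in>sets \<mu>. measure \<mu> (shift -` A \<inter> space \<mu>) = measure \<mu> A)
     \<and> (\<forall>w. measure \<mu> {x\<in>space \<mu>. word_at x (length w) = w} = hmm_cyl G P w)"

definition ergodic :: "(int \<Rightarrow> 'a) measure \<Rightarrow> bool" where
  "ergodic \<mu> \<longleftrightarrow> (\<forall>A\<in>sets \<mu>. shift -` A \<inter> space \<mu> = A \<longrightarrow> measure \<mu> A = 0 \<or> measure \<mu> A = 1)"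

definition hamming :: "'a list \<Rightarrow> 'a list \<Rightarrow> nat" where
  "hamming u v = card {i. i < length u \<and> u ! i \<noteq> v ! i}"

definition hball :: "nat \<Rightarrow> 'a list \<Rightarrow> 'a list set" where
  "hball r x = {w. length w = length x \<and> hamming x w \<le> r}"

definition Reps :: "real \<Rightarrow> 'a list set \<Rightarrow> 'a list set \<Rightarrow> ('a list set \<Rightarrow> real) \<Rightarrow> nat" where
  "Reps \<epsilon> C A \<eta> = (LEAST r::nat. \<eta> (A \<inter> (\<Union>x\<in>C. hball r x)) \<ge> 1 - \<epsilon>)"

definition marginal :: "(int \<Rightarrow> 'a) measure \<Rightarrow> nat \<Rightarrow> 'a list set \<Rightarrow> real" where
  "marginal \<mu> n S = measure \<mu> {x\<in>space \<mu>. word_at x n \<in> S}"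

definition R_eps :: "(int \<Rightarrow> 'a) set \<Rightarrow> (int \<Rightarrow> 'a) set \<Rightarrow> (int \<Rightarrow> 'a) measure \<Rightarrow> real \<Rightarrow> ereal" where
  "R_eps X Y \<mu> \<epsilon> = liminf (\<lambda>n. ereal (real (Reps \<epsilon> (Bn X n) (Bn Y n) (marginal \<mu> n)) / real n))"

definition R0 :: "(int \<Rightarrow> 'a) set \<Rightarrow> (int \<Rightarrow> 'a) set \<Rightarrow> (int \<Rightarrow> 'a) measure \<Rightarrow> ereal" where
  "R0 X Y \<mu> = Lim (at_right (0::real)) (R_eps X Y \<mu>)"

definition MB_feasible ::
  "('v,'e,'a) lgraph \<Rightarrow> ('w,'f,'a) lgraph \<Rightarrow> ('f \<Rightarrow> real) \<Rightarrow> ('e \<times> 'f \<Rightarrow> real) \<Rightarrow> bool" where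
  "MB_feasible GX GY PY P \<longleftrightarrow>
     (let E = edges GX \<times> edges GY;
          \<sigma> = (\<lambda>e. (src GX (fst e), src GY (snd e)));
          \<tau> = (\<lambda>e. (tgt GX (fst e), tgt GY (snd e))) in
     (\<forall>e\<in>E. P e \<ge> 0)
     \<and> (\<Sum>e\<in>E. P e) = 1
     \<and> (\<forall>e\<in>edges GY. (\<Sum>e'\<in>{e'\<in>E. snd e' = e}. P e') = PY e)
     \<and> (\<forall>v\<in>verts GX \<times> verts GY. (\<Sum>e\<in>{e\<in>E. \<sigma> e = v}. P e) = (\<Sum>e\<in>{e\<in>E. \<tau> e = v}. P e))
     \<and> (\<forall>e\<in>E. (\<Sum>e'\<in>{e'\<in>E. snd e' = snd e \<and> src GX (fst e') = src GX (fst e)}. P e')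
              = mc_Q GY PY (snd e) *
                (\<Sum>e'\<in>{e'\<in>E. src GY (snd e') = src GY (snd e) \<and> src GX (fst e') = src GX (fst e)}. P e')))"

text \<open>Optimal value of the LP (+infinity if infeasible).\<close>
definition MB :: "('v,'e,'a) lgraph \<Rightarrow> ('w,'f,'a) lgraph \<Rightarrow> ('f \<Rightarrow> real) \<Rightarrow> ereal" where
  "MB GX GY PY = Inf {ereal (\<Sum>e\<in>{e\<in>edges GX \<times> edges GY. lab GX (fst e) \<noteq> lab GY (snd e)}. P e)
                      | P. MB_feasible GX GY PY P}"

end

theory Submission
  imports Defs
begin


lemma space_seq_space: "space seq_space = UNIV"
  by (simp add: seq_space_def space_PiM PiE_UNIV)

lemma sets_single: "{x. x j = a} \<in> sets seq_space"
proof -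
  have "{x \<in> space seq_space. x j = a} \<in> sets seq_space"
    unfolding seq_space_def by measurable
  then show ?thesis by (simp add: space_seq_space)
qed

lemma sets_prefix: "{x::int\<Rightarrow>'a. \<forall>i<n. x (int i) = w ! i} \<in> sets seq_space"
proof (induction n)
  case 0
  then show ?case using sets.top[of seq_space] by (simp add: space_seq_space)
next
  case (Suc n)
  have eq: "{x::int\<Rightarrow>'a. \<forall>i<Suc n. x (int i) = w ! i} =
        {x. \<forall>i<n. x (int i) = w ! i} \<inter> {x. x (int n) = w ! n}"
    using less_Suc_eq by auto
  show ?case unfolding eq by (rule sets.Int[OF Suc sets_single])
qed

lemma word_at_eq_iff: "word_at x n = w \<longleftrightarrow> length w = n \<and> (\<forall>i<n. x (int i) = w ! i)"
  unfolding word_at_def by (auto simp: list_eq_iff_nth_eq)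

lemma sets_word_single: "{x::int\<Rightarrow>'a. word_at x n = w} \<in> sets seq_space"
proof (cases "length w = n")
  case True
  then show ?thesis using sets_prefix[of n w] by (simp add: word_at_eq_iff)
next
  case False
  then show ?thesis by (simp add: word_at_eq_iff)
qed

lemma finite_len: "finite {w::'a::finite list. length w = n}"
  using finite_lists_length_eq[of "UNIV::'a set" n] by simp

lemma word_set_eq: "{x. word_at x n \<in> W} = (\<Union>w\<in>{w\<in>W. length w = n}. {x. word_at x n = w})"
  by (auto simp: word_at_def)

lemma sets_word: "{x::int\<Rightarrow>'a::finite. word_at x n \<in> W} \<in> sets seq_space"
proof -
  have "finite {w\<in>W. length w = n}" using finite_len[of n] by (rule finite_subset[rotated]) auto
  then show ?thesis unfolding word_set_eq using sets_word_single by (intro sets.finite_UN) auto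
qed

lemma hmm_space:
  assumes "hidden_markov_measure G P \<mu>"
  shows "space \<mu> = UNIV" "sets \<mu> = sets seq_space" "prob_space \<mu>"
  using assms unfolding hidden_markov_measure_def
  using sets_eq_imp_space_eq space_seq_space by metis+

lemma marginal_sum:
  fixes \<mu> :: "(int \<Rightarrow> 'a::finite) measure"
  assumes "hidden_markov_measure G P \<mu>"
  shows "marginal \<mu> n W = (\<Sum>w\<in>{w\<in>W. length w = n}. hmm_cyl G P w)"
proof -
  note h = hmm_space[OF assms]
  interpret prob_space \<mu> by fact
  have fin: "finite {w\<in>W. length w = n}" using finite_len[of n] by (rule finite_subset[rotated]) auto
  have "marginal \<mu> n W = measure \<mu> (\<Union>w\<in>{w\<in>W. length w = n}. {x. word_at x n = w})"
    unfolding marginal_def h(1) word_set_eq[symmetric] by simp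
  also have "\<dots> = (\<Sum>w\<in>{w\<in>W. length w = n}. measure \<mu> {x. word_at x n = w})"
    using fin h sets_word_single
    by (intro finite_measure_finite_Union) (auto simp: disjoint_family_on_def)
  also have "\<dots> = (\<Sum>w\<in>{w\<in>W. length w = n}. hmm_cyl G P w)"
    using assms unfolding hidden_markov_measure_def h(1) by (intro sum.cong) auto
  finally show ?thesis .
qed


primrec fwd :: "'e set \<Rightarrow> ('e\<Rightarrow>'v) \<Rightarrow> ('e\<Rightarrow>'v) \<Rightarrow> 'e \<Rightarrow> nat \<Rightarrow> 'e" where
  "fwd Ep s t e 0 = e"
| "fwd Ep s t e (Suc k) = (SOME e'. e' \<in> Ep \<and> s e' = t (fwd Ep s t e k))"

lemma some_succ:
  assumes "\<exists>e'\<in>Ep. s e' = x"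
  shows "(SOME e'. e' \<in> Ep \<and> s e' = x) \<in> Ep \<and> s (SOME e'. e' \<in> Ep \<and> s e' = x) = x"
proof -
  have "\<exists>e'. e' \<in> Ep \<and> s e' = x" using assms by blast
  then show ?thesis by (rule someI_ex)
qed

lemma fwd_in:
  assumes succ: "\<And>e. e \<in> Ep \<Longrightarrow> \<exists>e'\<in>Ep. s e' = t e" and e: "e \<in> Ep"
  shows "fwd Ep s t e k \<in> Ep"
proof (induction k)
  case 0
  then show ?case using e by simp
next
  case (Suc k)
  show ?case unfolding fwd.simps by (rule conjunct1[OF some_succ[OF succ[OF Suc]]])
qed

lemma fwd_props:
  assumes succ: "\<And>e. e \<in> Ep \<Longrightarrow> \<exists>e'\<in>Ep. s e' = t e" and e: "e \<in> Ep"
  shows "fwd Ep s t e k \<in> Ep \<and> s (fwd Ep s t e (Suc k)) = t (fwd Ep s t e k)"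
proof
  show "fwd Ep s t e k \<in> Ep" by (rule fwd_in[OF succ e])
  then show "s (fwd Ep s t e (Suc k)) = t (fwd Ep s t e k)"
    unfolding fwd.simps by (rule conjunct2[OF some_succ[OF succ]])
qed

lemma ext_path:
  fixes es :: "'e list"
  assumes succ: "\<And>e. e \<in> Ep \<Longrightarrow> \<exists>e'\<in>Ep. s e' = t e"
    and pred: "\<And>e. e \<in> Ep \<Longrightarrow> \<exists>e'\<in>Ep. t e' = s e"
    and ne: "es \<noteq> []" and sub: "set es \<subseteq> Ep"
    and ch: "\<And>i. Suc i < length es \<Longrightarrow> t (es ! i) = s (es ! Suc i)"
  shows "\<exists>p::int\<Rightarrow>'e. (\<forall>i. p i \<in> Ep) \<and> (\<forall>i. t (p i) = s (p (i + 1)))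
           \<and> (\<forall>i<length es. p (int i) = es ! i)"
proof -
  define n where "n = length es"
  have n0: "n > 0" using ne n_def by simp
  have lastin: "last es \<in> Ep" using ne sub by auto
  have hdin: "hd es \<in> Ep" using ne sub by auto
  define F where "F = fwd Ep s t (last es)"
  define B where "B = fwd Ep t s (hd es)"
  have F: "\<And>k. F k \<in> Ep \<and> s (F (Suc k)) = t (F k)" unfolding F_def
    by (rule fwd_props[OF succ lastin])
  have B: "\<And>k. B k \<in> Ep \<and> t (B (Suc k)) = s (B k)" unfolding B_def
    by (rule fwd_props[where s=t and t=s, OF pred hdin])
  define p where "p = (\<lambda>i::int. if i < 0 then B (nat (- i)) else if i < int n then es ! nat i
                        else F (nat i - (n - 1)))"
  have esin: "\<And>i. i < n \<Longrightarrow> es ! i \<in> Ep" using sub n_def by auto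
  have "\<forall>i. p i \<in> Ep"
    unfolding p_def using F B esin by (auto simp: nat_less_iff)
  moreover have "\<forall>i. t (p i) = s (p (i + 1))"
  proof
    fix i :: int
    consider "i < -1" | "i = -1" | "0 \<le> i \<and> i + 1 < int n" | "i = int n - 1" | "i \<ge> int n" by linarith
    then show "t (p i) = s (p (i + 1))"
    proof cases
      case 1
      then have "nat (-i) = Suc (nat (-(i+1)))" by linarith
      then show ?thesis using 1 B unfolding p_def by auto
    next
      case 2
      then show ?thesis using B[of 0] n0 ne unfolding p_def B_def by (simp add: hd_conv_nth)
    next
      case 3
      then have "nat (i+1) = Suc (nat i)" by linarith
      then show ?thesis using 3 ch[of "nat i"] n_def unfolding p_def by (auto simp: nat_less_iff)
    next
      case 4
      then have i: "nat i = n - 1" "nat (i+1) - (n-1) = 1" using n0 by auto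
      have "es ! (n-1) = last es" using ne n_def by (simp add: last_conv_nth)
      then show ?thesis using 4 i F[of 0] n0 unfolding p_def F_def by auto
    next
      case 5
      then have "nat (i+1) - (n-1) = Suc (nat i - (n-1))" using n0 by linarith
      then show ?thesis using 5 F unfolding p_def by auto
    qed
  qed
  moreover have "\<forall>i<length es. p (int i) = es ! i" unfolding p_def n_def by auto
  ultimately show ?thesis by blast
qed

lemma Bn_of_path:
  assumes "\<forall>i. p i \<in> edges G" "\<forall>i. tgt G (p i) = src G (p (i + 1))"
  shows "map (\<lambda>i. lab G (p (int i))) [0..<n] \<in> Bn (presented G) n"
proof -
  have "(\<lambda>i. lab G (p i)) \<in> presented G" unfolding presented_def using assms by blast
  then show ?thesis unfolding Bn_def by (intro CollectI conjI bexI[of _ "\<lambda>i. lab G (p i)"]) (auto intro!: exI[of _ 0])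
qed

lemma flow_succ_pred:
  fixes P :: "'e \<Rightarrow> real"
  assumes fin: "finite E" and st: "\<And>e. e \<in> E \<Longrightarrow> s e \<in> V \<and> t e \<in> V"
    and nn: "\<And>e. e \<in> E \<Longrightarrow> P e \<ge> 0"
    and cons: "\<And>v. v \<in> V \<Longrightarrow> (\<Sum>e\<in>{e\<in>E. s e = v}. P e) = (\<Sum>e\<in>{e\<in>E. t e = v}. P e)"
    and e: "e \<in> E" "P e > 0"
  shows "\<exists>e'\<in>{e\<in>E. P e > 0}. s e' = t e" "\<exists>e'\<in>{e\<in>E. P e > 0}. t e' = s e"
proof -
  have "P e \<le> (\<Sum>e'\<in>{e'\<in>E. t e' = t e}. P e')"
    using fin e nn by (intro member_le_sum) auto
  hence pos: "(\<Sum>e'\<in>{e'\<in>E. s e' = t e}. P e') > 0" using cons[of "t e"] st[OF e(1)] e by linarith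
  have "\<exists>e'\<in>{e'\<in>E. s e' = t e}. P e' > 0"
  proof (rule ccontr)
    assume "\<not> ?thesis"
    then have "(\<Sum>e'\<in>{e'\<in>E. s e' = t e}. P e') \<le> 0" by (intro sum_nonpos) (auto simp: not_less)
    then show False using pos by linarith
  qed
  then obtain e' where "e' \<in> {e'\<in>E. s e' = t e}" "P e' > 0" by blast
  then show "\<exists>e'\<in>{e\<in>E. P e > 0}. s e' = t e" by auto
next
  have "P e \<le> (\<Sum>e'\<in>{e'\<in>E. s e' = s e}. P e')"
    using fin e nn by (intro member_le_sum) auto
  hence pos: "(\<Sum>e'\<in>{e'\<in>E. t e' = s e}. P e') > 0" using cons[of "s e"] st[OF e(1)] e by linarith
  have "\<exists>e'\<in>{e'\<in>E. t e' = s e}. P e' > 0"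
  proof (rule ccontr)
    assume "\<not> ?thesis"
    then have "(\<Sum>e'\<in>{e'\<in>E. t e' = s e}. P e') \<le> 0" by (intro sum_nonpos) (auto simp: not_less)
    then show False using pos by linarith
  qed
  then obtain e' where "e' \<in> {e'\<in>E. t e' = s e}" "P e' > 0" by blast
  then show "\<exists>e'\<in>{e\<in>E. P e > 0}. t e' = s e" by auto
qed


lemma Reps_le:
  assumes "\<eta> (A \<inter> (\<Union>x\<in>C. hball r x)) \<ge> 1 - e"
  shows "Reps e C A \<eta> \<le> r"
  unfolding Reps_def using assms by (rule Least_le)

lemma Reps_mono:
  assumes "\<eta> (A \<inter> (\<Union>x\<in>C. hball r0 x)) \<ge> 1 - e1" and "e1 \<le> e2"
  shows "Reps e2 C A \<eta> \<le> Reps e1 C A \<eta>"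
proof -
  have "\<eta> (A \<inter> (\<Union>x\<in>C. hball (Reps e1 C A \<eta>) x)) \<ge> 1 - e1"
    unfolding Reps_def using assms(1) by (rule LeastI)
  then show ?thesis using assms(2) by (intro Reps_le) simp
qed

lemma R_eps_mono:
  assumes "\<And>n. n > 0 \<Longrightarrow> Reps e2 (Bn X n) (Bn Y n) (marginal \<mu> n) \<le> Reps e1 (Bn X n) (Bn Y n) (marginal \<mu> n)"
  shows "R_eps X Y \<mu> e2 \<le> R_eps X Y \<mu> e1"
  unfolding R_eps_def
proof (rule Liminf_mono)
  show "\<forall>\<^sub>F n in sequentially. ereal (real (Reps e2 (Bn X n) (Bn Y n) (marginal \<mu> n)) / real n)
          \<le> ereal (real (Reps e1 (Bn X n) (Bn Y n) (marginal \<mu> n)) / real n)"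
    using eventually_gt_at_top[of "0::nat"]
    by eventually_elim (use assms in \<open>auto intro!: divide_right_mono\<close>)
qed

lemma R0_le:
  assumes mono: "\<And>e1 e2. 0 < e1 \<Longrightarrow> e1 \<le> e2 \<Longrightarrow> R_eps X Y \<mu> e2 \<le> R_eps X Y \<mu> e1"
    and bnd: "\<And>e. 0 < e \<Longrightarrow> R_eps X Y \<mu> e \<le> c"
  shows "R0 X Y \<mu> \<le> c"
proof -
  define L where "L = (SUP e\<in>{0<..}. R_eps X Y \<mu> e)"
  have lim: "(R_eps X Y \<mu> \<longlongrightarrow> L) (at_right (0::real))"
  proof (rule order_tendstoI)
    fix a assume "a < L"
    then obtain e0 where e0: "e0 \<in> {0<..}" "a < R_eps X Y \<mu> e0" unfolding L_def less_SUP_iff by blast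
    show "\<forall>\<^sub>F x in at_right 0. a < R_eps X Y \<mu> x"
      unfolding eventually_at_right_field
      using e0 mono by (intro exI[of _ e0]) (auto intro: less_le_trans)
  next
    fix b assume "L < b"
    show "\<forall>\<^sub>F x in at_right 0. R_eps X Y \<mu> x < b"
      unfolding eventually_at_right_field
    proof (intro exI[of _ 1] conjI allI impI)
      fix y :: real assume "0 < y"
      then have "R_eps X Y \<mu> y \<le> L" unfolding L_def by (intro SUP_upper) auto
      then show "R_eps X Y \<mu> y < b" using \<open>L < b\<close> by simp
    qed simp
  qed
  have "R0 X Y \<mu> = L" unfolding R0_def using lim by (intro tendsto_Lim) simp
  also have "L \<le> c" unfolding L_def using bnd by (intro SUP_least) auto
  finally show ?thesis .
qed


locale mbs =
  fixes GX :: "('v,'e,'a::finite) lgraph" and GY :: "('w,'f,'a) lgraph"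
    and PY :: "'f \<Rightarrow> real" and P :: "'e \<times> 'f \<Rightarrow> real"
  assumes wfX: "wf_lgraph GX" and wfY: "wf_lgraph GY"
    and stY: "stationary_mc GY PY" and feas: "MB_feasible GX GY PY P"
begin

definition "E = edges GX \<times> edges GY"
definition sg where "sg e = (src GX (fst e), src GY (snd e))"
definition tg where "tg e = (tgt GX (fst e), tgt GY (snd e))"
definition "Ep = {e\<in>E. P e > 0}"
definition "piP v = (\<Sum>e\<in>{e\<in>E. sg e = v}. P e)"
definition "QP e = P e / piP (sg e)"
definition "Qf u e = (\<Sum>e'\<in>{e'\<in>Ep. sg e' = tg e}. QP e' * u e')"

lemma nn: "e \<in> E \<Longrightarrow> P e \<ge> 0"
  using feas unfolding MB_feasible_def Let_def E_def by auto

lemma sum1: "(\<Sum>e\<in>E. P e) = 1"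
  using feas unfolding MB_feasible_def Let_def E_def by auto

lemma marg: "f \<in> edges GY \<Longrightarrow> (\<Sum>e'\<in>{e'\<in>E. snd e' = f}. P e') = PY f"
  using feas unfolding MB_feasible_def Let_def E_def by auto

lemma cons: "v \<in> verts GX \<times> verts GY \<Longrightarrow> (\<Sum>e\<in>{e\<in>E. sg e = v}. P e) = (\<Sum>e\<in>{e\<in>E. tg e = v}. P e)"
  using feas unfolding MB_feasible_def Let_def E_def sg_def tg_def by blast

lemma cond5: "e \<in> E \<Longrightarrow> (\<Sum>e'\<in>{e'\<in>E. snd e' = snd e \<and> src GX (fst e') = src GX (fst e)}. P e')
   = mc_Q GY PY (snd e) * (\<Sum>e'\<in>{e'\<in>E. src GY (snd e') = src GY (snd e) \<and> src GX (fst e') = src GX (fst e)}. P e')"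
  using feas unfolding MB_feasible_def Let_def E_def by blast

lemma finE: "finite E"
  using wfX wfY unfolding wf_lgraph_def E_def by auto

lemma finEp: "finite Ep"
  using finE unfolding Ep_def by auto

lemma Ep_E: "e \<in> Ep \<Longrightarrow> e \<in> E" unfolding Ep_def by auto

lemma stE: "e \<in> E \<Longrightarrow> sg e \<in> verts GX \<times> verts GY \<and> tg e \<in> verts GX \<times> verts GY"
  using wfX wfY unfolding wf_lgraph_def E_def sg_def tg_def mem_Times_iff fst_conv snd_conv by blast

lemma P_zero: assumes "e \<in> E" "e \<notin> Ep" shows "P e = 0"
proof -
  have "\<not> P e > 0" using assms unfolding Ep_def by blast
  then show ?thesis using nn[OF assms(1)] by linarith
qed

lemma sum_Ep: "(\<Sum>e\<in>{e\<in>Ep. R e}. P e * u e) = (\<Sum>e\<in>{e\<in>E. R e}. P e * u e)"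
  by (rule sum.mono_neutral_left) (use finE P_zero Ep_E in auto)

lemma sum_Ep1: "(\<Sum>e\<in>{e\<in>Ep. R e}. P e) = (\<Sum>e\<in>{e\<in>E. R e}. P e)"
  using sum_Ep[where R=R and u="\<lambda>_. 1"] by simp

lemma Ep_succ: "e \<in> Ep \<Longrightarrow> \<exists>e'\<in>Ep. sg e' = tg e"
  using flow_succ_pred(1)[OF finE, of sg "verts GX \<times> verts GY" tg P e] stE nn cons
  unfolding Ep_def by auto

lemma Ep_pred: "e \<in> Ep \<Longrightarrow> \<exists>e'\<in>Ep. tg e' = sg e"
  using flow_succ_pred(2)[OF finE, of sg "verts GX \<times> verts GY" tg P e] stE nn cons
  unfolding Ep_def by auto

lemma piP_sg: "e \<in> Ep \<Longrightarrow> piP (sg e) > 0"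
proof -
  assume e: "e \<in> Ep"
  have "P e \<le> piP (sg e)" unfolding piP_def
    using e finE nn by (intro member_le_sum) (auto simp: Ep_def)
  then show ?thesis using e by (auto simp: Ep_def)
qed

lemma piP_tg: "e \<in> Ep \<Longrightarrow> piP (tg e) > 0"
proof -
  assume e: "e \<in> Ep"
  have "P e \<le> (\<Sum>e'\<in>{e'\<in>E. tg e' = tg e}. P e')"
    using e finE nn by (intro member_le_sum) (auto simp: Ep_def)
  also have "\<dots> = piP (tg e)" unfolding piP_def using cons[OF conjunct2[OF stE[OF Ep_E[OF e]]]] by simp
  finally show ?thesis using e by (auto simp: Ep_def)
qed

lemma QP_pos: "e \<in> Ep \<Longrightarrow> QP e > 0"
  unfolding QP_def using piP_sg by (auto simp: Ep_def)

lemma QP_nn: "e \<in> Ep \<Longrightarrow> QP e \<ge> 0"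
  using QP_pos by (simp add: less_imp_le)

lemma stoch: "e \<in> Ep \<Longrightarrow> (\<Sum>e'\<in>{e'\<in>Ep. sg e' = tg e}. QP e') = 1"
proof -
  assume e: "e \<in> Ep"
  have "(\<Sum>e'\<in>{e'\<in>Ep. sg e' = tg e}. QP e') = (\<Sum>e'\<in>{e'\<in>Ep. sg e' = tg e}. P e' / piP (tg e))"
    unfolding QP_def by (intro sum.cong) auto
  also have "\<dots> = (\<Sum>e'\<in>{e'\<in>Ep. sg e' = tg e}. P e') / piP (tg e)"
    by (simp add: sum_divide_distrib)
  also have "\<dots> = 1" using sum_Ep1[of "\<lambda>e'. sg e' = tg e"] piP_tg[OF e] unfolding piP_def by simp
  finally show ?thesis .
qed

lemma Qf_cong: "(\<And>e'. e' \<in> Ep \<Longrightarrow> u e' = v e') \<Longrightarrow> Qf u e = Qf v e"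
  unfolding Qf_def by (intro sum.cong) auto

lemma Qf_add: "Qf (\<lambda>x. u x + v x) e = Qf u e + Qf v e"
  unfolding Qf_def by (simp add: distrib_left sum.distrib)

lemma Qf_diff: "Qf (\<lambda>x. u x - v x) e = Qf u e - Qf v e"
  unfolding Qf_def by (simp add: right_diff_distrib sum_subtractf)

lemma Qf_scale: "Qf (\<lambda>x. c * u x) e = c * Qf u e"
  unfolding Qf_def by (simp add: sum_distrib_left mult.left_commute)

lemma Qf_sum: "Qf (\<lambda>x. \<Sum>j\<in>J. u j x) e = (\<Sum>j\<in>J. Qf (u j) e)"
  unfolding Qf_def by (simp add: sum_distrib_left sum.swap[of _ J])

lemma Qf_const: "e \<in> Ep \<Longrightarrow> Qf (\<lambda>_. c) e = c"
  unfolding Qf_def using stoch by (simp add: sum_distrib_right[symmetric])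

lemma Qf_mono: "(\<And>e'. e' \<in> Ep \<Longrightarrow> u e' \<le> v e') \<Longrightarrow> Qf u e \<le> Qf v e"
  unfolding Qf_def using QP_nn by (intro sum_mono mult_left_mono) auto

lemma Qf_bound: "e \<in> Ep \<Longrightarrow> (\<And>e'. e' \<in> Ep \<Longrightarrow> a \<le> u e' \<and> u e' \<le> b) \<Longrightarrow> a \<le> Qf u e \<and> Qf u e \<le> b"
proof -
  assume e: "e \<in> Ep" and b: "\<And>e'. e' \<in> Ep \<Longrightarrow> a \<le> u e' \<and> u e' \<le> b"
  have "Qf (\<lambda>_. a) e \<le> Qf u e" by (rule Qf_mono) (use b in blast)
  moreover have "Qf u e \<le> Qf (\<lambda>_. b) e" by (rule Qf_mono) (use b in blast)
  ultimately show ?thesis using Qf_const[OF e] by simp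
qed

lemma stat: "(\<Sum>e\<in>Ep. P e * Qf u e) = (\<Sum>e\<in>Ep. P e * u e)"
proof -
  have "(\<Sum>e\<in>Ep. P e * Qf u e) = (\<Sum>e\<in>Ep. \<Sum>e'\<in>{e'\<in>Ep. sg e' = tg e}. P e * (QP e' * u e'))"
    unfolding Qf_def by (simp add: sum_distrib_left)
  also have "\<dots> = (\<Sum>e'\<in>Ep. \<Sum>e\<in>{e\<in>Ep. sg e' = tg e}. P e * (QP e' * u e'))"
    by (rule sum.swap_restrict[OF finEp finEp])
  also have "\<dots> = (\<Sum>e'\<in>Ep. (QP e' * u e') * (\<Sum>e\<in>{e\<in>Ep. tg e = sg e'}. P e))"
  proof (intro sum.cong refl)
    fix e' assume "e' \<in> Ep"
    have eq: "{e\<in>Ep. sg e' = tg e} = {e\<in>Ep. tg e = sg e'}" by auto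
    have "(\<Sum>e\<in>{e\<in>Ep. sg e' = tg e}. P e * (QP e' * u e')) = (\<Sum>e\<in>{e\<in>Ep. tg e = sg e'}. P e) * (QP e' * u e')"
      unfolding eq by (simp add: sum_distrib_right)
    then show "(\<Sum>e\<in>{e\<in>Ep. sg e' = tg e}. P e * (QP e' * u e')) = (QP e' * u e') * (\<Sum>e\<in>{e\<in>Ep. tg e = sg e'}. P e)"
      by (simp add: mult.commute)
  qed
  also have "\<dots> = (\<Sum>e'\<in>Ep. P e' * u e')"
  proof (intro sum.cong refl)
    fix e' assume e': "e' \<in> Ep"
    have "(\<Sum>e\<in>{e\<in>Ep. tg e = sg e'}. P e) = (\<Sum>e\<in>{e\<in>E. tg e = sg e'}. P e)" by (rule sum_Ep1)
    also have "\<dots> = piP (sg e')" unfolding piP_def using cons[OF conjunct1[OF stE[OF Ep_E[OF e']]]] by simp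
    finally show "(QP e' * u e') * (\<Sum>e\<in>{e\<in>Ep. tg e = sg e'}. P e) = P e' * u e'"
      using piP_sg[OF e'] unfolding QP_def by simp
  qed
  finally show ?thesis .
qed

end


lemma finite_subseq:
  fixes X :: "nat \<Rightarrow> 'x \<Rightarrow> real"
  assumes "finite S" and "\<And>x n. x \<in> S \<Longrightarrow> \<bar>X n x\<bar> \<le> B"
  shows "\<exists>r. strict_mono r \<and> (\<forall>x\<in>S. convergent (\<lambda>n. X (r n) x))"
  using assms
proof (induction S rule: finite_induct)
  case empty
  then show ?case by (intro exI[of _ id]) (auto simp: strict_mono_def)
next
  case (insert x S)
  then obtain r where r: "strict_mono r" "\<forall>y\<in>S. convergent (\<lambda>n. X (r n) y)" by auto
  obtain r' where r': "strict_mono r'" "monoseq (\<lambda>n. X (r (r' n)) x)"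
    using seq_monosub[of "\<lambda>n. X (r n) x"] by auto
  have "Bseq (\<lambda>n. X (r (r' n)) x)" using insert.prems[of x] by (intro BseqI'[of _ B]) auto
  then have cx: "convergent (\<lambda>n. X (r (r' n)) x)" using r'(2) by (rule Bseq_monoseq_convergent)
  have "\<forall>y\<in>S. convergent (\<lambda>n. X (r (r' n)) y)"
  proof
    fix y assume "y \<in> S"
    then obtain L where "(\<lambda>n. X (r n) y) \<longlonglongrightarrow> L" using r(2) by (auto simp: convergent_def)
    then have "(\<lambda>n. X (r (r' n)) y) \<longlonglongrightarrow> L" using r'(1) by (rule LIMSEQ_subseq_LIMSEQ[unfolded comp_def])
    then show "convergent (\<lambda>n. X (r (r' n)) y)" by (auto simp: convergent_def)
  qed
  moreover have "strict_mono (\<lambda>n. r (r' n))" using strict_mono_o[OF r(1) r'(1)] by (simp add: comp_def)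
  ultimately show ?case using cx by (intro exI[of _ "\<lambda>n. r (r' n)"]) auto
qed

context mbs
begin

definition fM :: "'e \<times> 'f \<Rightarrow> real" where
  "fM e = (if lab GX (fst e) \<noteq> lab GY (snd e) then 1 else 0)"

definition "cval = (\<Sum>e\<in>{e\<in>E. lab GX (fst e) \<noteq> lab GY (snd e)}. P e)"

lemma cval_eq: "cval = (\<Sum>e\<in>Ep. P e * fM e)"
proof -
  have "(\<Sum>e\<in>Ep. P e * fM e) = (\<Sum>e\<in>{e\<in>Ep. True}. P e * fM e)" by simp
  also have "\<dots> = (\<Sum>e\<in>{e\<in>E. True}. P e * fM e)" by (rule sum_Ep)
  also have "\<dots> = (\<Sum>e\<in>E. P e * fM e)" by simp
  also have "\<dots> = (\<Sum>e\<in>E. if lab GX (fst e) \<noteq> lab GY (snd e) then P e else 0)"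
    unfolding fM_def by (intro sum.cong) auto
  also have "\<dots> = cval" unfolding cval_def by (rule sum.inter_filter[OF finE, symmetric])
  finally show ?thesis ..
qed

lemma cval_nn: "cval \<ge> 0"
  unfolding cval_def using nn by (intro sum_nonneg) auto

primrec Qpow :: "nat \<Rightarrow> ('e \<times> 'f \<Rightarrow> real) \<Rightarrow> 'e \<times> 'f \<Rightarrow> real" where
  "Qpow 0 u = u"
| "Qpow (Suc j) u = Qf (Qpow j u)"

definition "Am m u e = (\<Sum>j<m. Qpow j u e) / real m"

lemma Qpow_bound: "e \<in> Ep \<Longrightarrow> (\<And>e'. e' \<in> Ep \<Longrightarrow> a \<le> u e' \<and> u e' \<le> b) \<Longrightarrow> a \<le> Qpow j u e \<and> Qpow j u e \<le> b"
proof (induction j arbitrary: e)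
  case 0
  then show ?case by simp
next
  case (Suc j)
  show ?case unfolding Qpow.simps by (rule Qf_bound[OF Suc.prems(1)]) (use Suc in auto)
qed

lemma Qpow_diff: "Qpow j (\<lambda>x. u x - v x) = (\<lambda>x. Qpow j u x - Qpow j v x)"
  by (induction j) (auto simp: Qf_diff)

lemma Qpow_fix: "(\<And>e. e \<in> Ep \<Longrightarrow> Qf u e = u e) \<Longrightarrow> e \<in> Ep \<Longrightarrow> Qpow j u e = u e"
proof (induction j arbitrary: e)
  case 0
  then show ?case by simp
next
  case (Suc j)
  have "Qf (Qpow j u) e = Qf u e" by (rule Qf_cong) (use Suc in auto)
  then show ?case using Suc by simp
qed

lemma stat_pow: "(\<Sum>e\<in>Ep. P e * Qpow j u e) = (\<Sum>e\<in>Ep. P e * u e)"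
  by (induction j) (auto simp: stat)

lemma fM_bound: "0 \<le> fM e \<and> fM e \<le> 1"
  unfolding fM_def by auto

lemma Am_bound: "e \<in> Ep \<Longrightarrow> 0 \<le> Am m fM e \<and> Am m fM e \<le> 1"
proof -
  assume e: "e \<in> Ep"
  have b: "\<And>j. 0 \<le> Qpow j fM e \<and> Qpow j fM e \<le> 1" using Qpow_bound[OF e] fM_bound by blast
  have "(\<Sum>j<m. Qpow j fM e) \<le> real m" using sum_mono[of "{..<m}" "\<lambda>j. Qpow j fM e" "\<lambda>_. 1"] b by simp
  moreover have "(\<Sum>j<m. Qpow j fM e) \<ge> 0" using b by (intro sum_nonneg) auto
  ultimately show ?thesis unfolding Am_def by (cases "m = 0") (auto simp: divide_le_eq)
qed

lemma Qf_div: "Qf (\<lambda>x. u x / c) e = Qf u e / c"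
  using Qf_scale[of "inverse c" u e] by (simp add: divide_inverse mult.commute)

lemma Qf_Am: "Qf (Am m u) e - Am m u e = (Qpow m u e - u e) / real m"
proof -
  have "Qf (Am m u) e = (\<Sum>j<m. Qpow (Suc j) u e) / real m"
    unfolding Am_def Qf_div Qf_sum by simp
  then have "Qf (Am m u) e - Am m u e = (\<Sum>j<m. Qpow (Suc j) u e - Qpow j u e) / real m"
    unfolding Am_def by (simp add: sum_subtractf diff_divide_distrib)
  also have "\<dots> = (Qpow m u e - u e) / real m" by (subst sum_lessThan_telescope) simp
  finally show ?thesis .
qed

definition "rs = (SOME r. strict_mono r \<and> (\<forall>e\<in>Ep. convergent (\<lambda>n. Am (r n) fM e)))"

lemma rs: "strict_mono rs" "\<And>e. e \<in> Ep \<Longrightarrow> convergent (\<lambda>n. Am (rs n) fM e)"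
proof -
  have "\<exists>r. strict_mono r \<and> (\<forall>e\<in>Ep. convergent (\<lambda>n. Am (r n) fM e))"
    using Am_bound by (intro finite_subseq[OF finEp, of _ 1]) (auto simp: abs_le_iff)
  from someI_ex[OF this] show "strict_mono rs" "\<And>e. e \<in> Ep \<Longrightarrow> convergent (\<lambda>n. Am (rs n) fM e)"
    unfolding rs_def by auto
qed

definition "Z e = lim (\<lambda>n. Am (rs n) fM e)"

lemma Z_lim: "e \<in> Ep \<Longrightarrow> (\<lambda>n. Am (rs n) fM e) \<longlonglongrightarrow> Z e"
  unfolding Z_def using rs(2) by (simp add: convergent_LIMSEQ_iff)

lemma Z_bound: "e \<in> Ep \<Longrightarrow> 0 \<le> Z e \<and> Z e \<le> 1"
  using LIMSEQ_le_const[OF Z_lim, of e 0] LIMSEQ_le_const2[OF Z_lim, of e 1] Am_bound by auto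

lemma rs_inf: "filterlim (\<lambda>n. real (rs n)) at_top sequentially"
  using filterlim_subseq[OF rs(1)] filterlim_real_sequentially by (rule filterlim_compose[rotated])

lemma QZ: "e \<in> Ep \<Longrightarrow> Qf Z e = Z e"
proof -
  assume e: "e \<in> Ep"
  have l1: "(\<lambda>n. Qf (Am (rs n) fM) e) \<longlonglongrightarrow> Qf Z e"
    unfolding Qf_def by (intro tendsto_intros Z_lim) auto
  have l2: "(\<lambda>n. Qf (Am (rs n) fM) e - Am (rs n) fM e) \<longlonglongrightarrow> 0"
  proof (rule Lim_null_comparison)
    show "\<forall>\<^sub>F n in sequentially. norm (Qf (Am (rs n) fM) e - Am (rs n) fM e) \<le> 1 / real (rs n)"
    proof (rule always_eventually, rule allI)
      fix n
      have b1: "0 \<le> Qpow (rs n) fM e \<and> Qpow (rs n) fM e \<le> 1" using Qpow_bound[OF e] fM_bound by blast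
      have b2: "0 \<le> fM e \<and> fM e \<le> 1" by (rule fM_bound)
      have "\<bar>Qpow (rs n) fM e - fM e\<bar> \<le> 1" using b1 b2 by (simp add: abs_le_iff)
      then show "norm (Qf (Am (rs n) fM) e - Am (rs n) fM e) \<le> 1 / real (rs n)"
        unfolding Qf_Am by (cases "rs n = 0") (auto simp: divide_le_eq abs_divide)
    qed
    show "(\<lambda>n. 1 / real (rs n)) \<longlonglongrightarrow> 0"
      using rs_inf by (intro tendsto_divide_0[OF tendsto_const]) (rule filterlim_at_top_imp_at_infinity)
  qed
  have "(\<lambda>n. Qf (Am (rs n) fM) e - Am (rs n) fM e) \<longlonglongrightarrow> Qf Z e - Z e"
    by (intro tendsto_intros l1 Z_lim e)
  with l2 have "Qf Z e - Z e = 0" using LIMSEQ_unique by blast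
  then show ?thesis by simp
qed

lemma sum_PZ: "(\<Sum>e\<in>Ep. P e * Z e) = cval"
proof -
  have eq: "(\<Sum>e\<in>Ep. P e * Am m fM e) = cval" if "m > 0" for m
  proof -
    have "(\<Sum>e\<in>Ep. P e * Am m fM e) = (\<Sum>j<m. \<Sum>e\<in>Ep. P e * Qpow j fM e) / real m"
      unfolding Am_def by (simp add: sum_divide_distrib sum_distrib_left sum.swap[of _ Ep])
    also have "\<dots> = (\<Sum>j<m. cval) / real m" unfolding stat_pow cval_eq ..
    finally show ?thesis using that by simp
  qed
  have "(\<lambda>n. \<Sum>e\<in>Ep. P e * Am (rs n) fM e) \<longlonglongrightarrow> (\<Sum>e\<in>Ep. P e * Z e)"
    by (intro tendsto_intros Z_lim) auto
  moreover have "(\<lambda>n. \<Sum>e\<in>Ep. P e * Am (rs n) fM e) \<longlonglongrightarrow> cval"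
  proof (rule tendsto_eventually)
    show "\<forall>\<^sub>F n in sequentially. (\<Sum>e\<in>Ep. P e * Am (rs n) fM e) = cval"
      using eventually_gt_at_top[of "0::nat"]
    proof eventually_elim
      case (elim n)
      have "rs n \<ge> n" using rs(1) by (rule strict_mono_imp_increasing)
      then show ?case using elim eq by simp
    qed
  qed
  ultimately show ?thesis using LIMSEQ_unique by blast
qed

end


context mbs
begin

lemma Z_const:
  assumes e: "e \<in> Ep" and e': "e' \<in> Ep" and ch: "sg e' = tg e"
  shows "Z e' = Z e"
proof -
  define V where "V x = (\<Sum>y\<in>{y\<in>Ep. sg y = tg x}. QP y * (Z y - Z x)\<^sup>2)" for x
  have Vnn: "V x \<ge> 0" for x unfolding V_def using QP_nn by (intro sum_nonneg) auto
  have Veq: "V x = Qf (\<lambda>y. (Z y)\<^sup>2) x - (Z x)\<^sup>2" if x: "x \<in> Ep" for x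
  proof -
    have "V x = (\<Sum>y\<in>{y\<in>Ep. sg y = tg x}. QP y * (Z y)\<^sup>2 - 2 * Z x * (QP y * Z y) + (Z x)\<^sup>2 * QP y)"
      unfolding V_def by (intro sum.cong) (auto simp: power2_eq_square algebra_simps)
    also have "\<dots> = Qf (\<lambda>y. (Z y)\<^sup>2) x - 2 * Z x * Qf Z x + (Z x)\<^sup>2 * (\<Sum>y\<in>{y\<in>Ep. sg y = tg x}. QP y)"
      unfolding Qf_def by (simp add: sum.distrib sum_subtractf sum_distrib_left)
    also have "\<dots> = Qf (\<lambda>y. (Z y)\<^sup>2) x - (Z x)\<^sup>2"
      using QZ[OF x] stoch[OF x] by (simp add: power2_eq_square)
    finally show ?thesis .
  qed
  have "(\<Sum>x\<in>Ep. P x * V x) = (\<Sum>x\<in>Ep. P x * Qf (\<lambda>y. (Z y)\<^sup>2) x - P x * (Z x)\<^sup>2)"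
  proof (intro sum.cong refl)
    fix x assume "x \<in> Ep"
    then show "P x * V x = P x * Qf (\<lambda>y. (Z y)\<^sup>2) x - P x * (Z x)\<^sup>2" by (simp add: Veq right_diff_distrib)
  qed
  also have "\<dots> = 0" using stat[of "\<lambda>y. (Z y)\<^sup>2"] by (simp add: sum_subtractf)
  finally have s0: "(\<Sum>x\<in>Ep. P x * V x) = 0" .
  have nonneg: "\<And>x. x \<in> Ep \<Longrightarrow> P x * V x \<ge> 0"
  proof -
    fix x assume "x \<in> Ep"
    then have "P x \<ge> 0" unfolding Ep_def by simp
    then show "P x * V x \<ge> 0" using Vnn[of x] by simp
  qed
  have "\<forall>x\<in>Ep. P x * V x = 0" using iffD1[OF sum_nonneg_eq_0_iff[OF finEp nonneg] s0] .
  then have pv: "P e * V e = 0" using e by blast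
  have "P e > 0" using e unfolding Ep_def by simp
  with pv have v0: "V e = 0" by simp
  have finS: "finite {y\<in>Ep. sg y = tg e}" using finEp by simp
  have nn2: "\<And>y. y \<in> {y\<in>Ep. sg y = tg e} \<Longrightarrow> QP y * (Z y - Z e)\<^sup>2 \<ge> 0"
    using QP_nn by simp
  have "\<forall>y\<in>{y\<in>Ep. sg y = tg e}. QP y * (Z y - Z e)\<^sup>2 = 0"
    using iffD1[OF sum_nonneg_eq_0_iff[OF finS nn2] v0[unfolded V_def]] .
  moreover have "e' \<in> {y\<in>Ep. sg y = tg e}" using e' ch by simp
  ultimately have "QP e' * (Z e' - Z e)\<^sup>2 = 0" by blast
  then show ?thesis using QP_pos[OF e'] by simp
qed

lemma decomp:
  assumes eta: "\<eta> > 0"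
  shows "\<exists>a h. (\<forall>e\<in>Ep. \<bar>a e\<bar> \<le> \<eta>) \<and> (\<forall>e\<in>Ep. fM e = Z e + a e + (h e - Qf h e))"
proof -
  have ev: "\<forall>\<^sub>F n in sequentially. (\<forall>e\<in>Ep. dist (Am (rs n) fM e) (Z e) < \<eta>) \<and> rs n > 0"
  proof (rule eventually_conj)
    show "\<forall>\<^sub>F n in sequentially. \<forall>e\<in>Ep. dist (Am (rs n) fM e) (Z e) < \<eta>"
      using finEp Z_lim eta by (intro eventually_ball_finite) (auto simp: tendsto_iff)
    show "\<forall>\<^sub>F n in sequentially. rs n > 0"
    proof (rule eventually_mono[OF eventually_gt_at_top[of "0::nat"]])
      fix n :: nat assume "n > 0"
      then show "rs n > 0" using strict_mono_imp_increasing[OF rs(1), of n] by linarith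
    qed
  qed
  then obtain N where "\<forall>n\<ge>N. (\<forall>e\<in>Ep. dist (Am (rs n) fM e) (Z e) < \<eta>) \<and> rs n > 0"
    unfolding eventually_sequentially by blast
  then obtain k where k: "\<forall>e\<in>Ep. dist (Am (rs k) fM e) (Z e) < \<eta>" "rs k > 0" by blast
  define m where "m = rs k"
  have m: "m > 0" using k m_def by simp
  define g where "g x = fM x - Z x" for x
  define h where "h x = (\<Sum>j<m. \<Sum>i<j. Qpow i g x) / real m" for x
  have am: "Am m g e = Am m fM e - Z e" if e: "e \<in> Ep" for e
  proof -
    have "(\<Sum>j<m. Qpow j g e) = (\<Sum>j<m. Qpow j fM e - Z e)"
      unfolding g_def Qpow_diff using Qpow_fix[OF QZ e] by simp
    then show ?thesis unfolding Am_def using m by (simp add: sum_subtractf diff_divide_distrib)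
  qed
  have hq: "h e - Qf h e = g e - Am m g e" for e
  proof -
    have "Qf h e = (\<Sum>j<m. \<Sum>i<j. Qpow (Suc i) g e) / real m"
      unfolding h_def Qf_div Qf_sum by simp
    then have "h e - Qf h e = (\<Sum>j<m. \<Sum>i<j. Qpow i g e - Qpow (Suc i) g e) / real m"
      unfolding h_def by (simp add: sum_subtractf diff_divide_distrib)
    also have "\<dots> = (\<Sum>j<m. g e - Qpow j g e) / real m"
      by (subst sum_lessThan_telescope') simp
    also have "\<dots> = g e - Am m g e" unfolding Am_def using m
      by (simp add: sum_subtractf diff_divide_distrib)
    finally show ?thesis .
  qed
  have A: "\<forall>e\<in>Ep. \<bar>Am m g e\<bar> \<le> \<eta>"
    using am k(1) unfolding m_def by (auto simp: dist_real_def)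
  have B: "\<forall>e\<in>Ep. fM e = Z e + Am m g e + (h e - Qf h e)"
    unfolding hq g_def by simp
  show ?thesis using A B by blast
qed

end


context mbs
begin

definition Kop :: "(('e \<times> 'f) list \<Rightarrow> real) \<Rightarrow> ('e \<times> 'f) list \<Rightarrow> real" where
  "Kop F p = (\<Sum>e'\<in>{e'\<in>Ep. sg e' = tg (last p)}. QP e' * F (p @ [e']))"

primrec ex :: "'e \<times> 'f \<Rightarrow> nat \<Rightarrow> (('e \<times> 'f) list \<Rightarrow> real) \<Rightarrow> real" where
  "ex e0 0 F = F [e0]"
| "ex e0 (Suc n) F = ex e0 n (Kop F)"

definition reach :: "'e \<times> 'f \<Rightarrow> nat \<Rightarrow> ('e \<times> 'f) list set" where
  "reach e0 n = {p. length p = Suc n \<and> p ! 0 = e0 \<and> set p \<subseteq> Ep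
      \<and> (\<forall>i. Suc i < length p \<longrightarrow> tg (p ! i) = sg (p ! Suc i))}"

lemma reach0: "e0 \<in> Ep \<Longrightarrow> [e0] \<in> reach e0 0"
  unfolding reach_def by auto

lemma reach_len: "p \<in> reach e0 n \<Longrightarrow> length p = Suc n"
  unfolding reach_def by auto

lemma reach_last: assumes "p \<in> reach e0 n" shows "last p \<in> Ep"
proof -
  have "p \<noteq> []" "set p \<subseteq> Ep" using assms unfolding reach_def by auto
  then show ?thesis using last_in_set by blast
qed

lemma reach_snoc:
  assumes p: "p \<in> reach e0 n" and e': "e' \<in> Ep" "sg e' = tg (last p)"
  shows "p @ [e'] \<in> reach e0 (Suc n)"
proof -
  have len: "length p = Suc n" using p by (rule reach_len)
  have "tg ((p @ [e']) ! i) = sg ((p @ [e']) ! Suc i)" if i: "Suc i < length (p @ [e'])" for i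
  proof (cases "Suc i < length p")
    case True
    then show ?thesis using p unfolding reach_def by (auto simp: nth_append)
  next
    case False
    then have "i = n" using i len by simp
    moreover have "last p = p ! n" using len by (cases "p = []") (auto simp: last_conv_nth)
    ultimately show ?thesis using len e' by (simp add: nth_append)
  qed
  then show ?thesis using p e' len unfolding reach_def by (auto simp: nth_append)
qed

lemma ex_cong: "(\<And>p. p \<in> reach e0 n \<Longrightarrow> F p = G p) \<Longrightarrow> e0 \<in> Ep \<Longrightarrow> ex e0 n F = ex e0 n G"
proof (induction n arbitrary: F G)
  case 0
  then show ?case using reach0 by simp
next
  case (Suc n)
  have "ex e0 n (Kop F) = ex e0 n (Kop G)"
  proof (rule Suc.IH)
    fix p assume p: "p \<in> reach e0 n"
    show "Kop F p = Kop G p" unfolding Kop_def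
      by (intro sum.cong refl arg_cong2[where f="(*)"] Suc.prems(1) reach_snoc[OF p]) auto
  qed (use Suc in auto)
  then show ?case by simp
qed

lemma ex_mono: "(\<And>p. p \<in> reach e0 n \<Longrightarrow> F p \<le> G p) \<Longrightarrow> e0 \<in> Ep \<Longrightarrow> ex e0 n F \<le> ex e0 n G"
proof (induction n arbitrary: F G)
  case 0
  then show ?case using reach0 by simp
next
  case (Suc n)
  have "ex e0 n (Kop F) \<le> ex e0 n (Kop G)"
  proof (rule Suc.IH)
    fix p assume p: "p \<in> reach e0 n"
    show "Kop F p \<le> Kop G p" unfolding Kop_def
      by (intro sum_mono mult_left_mono Suc.prems(1) reach_snoc[OF p] QP_nn) auto
  qed (use Suc in auto)
  then show ?case by simp
qed

lemma Kop_add: "Kop (\<lambda>p. F p + G p) = (\<lambda>p. Kop F p + Kop G p)"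
  unfolding Kop_def by (auto simp: distrib_left sum.distrib)

lemma Kop_scale: "Kop (\<lambda>p. c * F p) = (\<lambda>p. c * Kop F p)"
  unfolding Kop_def by (auto simp: sum_distrib_left mult.left_commute)

lemma ex_add: "ex e0 n (\<lambda>p. F p + G p) = ex e0 n F + ex e0 n G"
  by (induction n arbitrary: F G) (auto simp: Kop_add)

lemma ex_scale: "ex e0 n (\<lambda>p. c * F p) = c * ex e0 n F"
  by (induction n arbitrary: F) (auto simp: Kop_scale)

lemma ex_zero: "ex e0 n (\<lambda>p. 0) = 0"
  using ex_scale[of e0 n 0 "\<lambda>p. 0"] by simp

lemma ex_sum: "finite W \<Longrightarrow> ex e0 n (\<lambda>p. \<Sum>w\<in>W. F w p) = (\<Sum>w\<in>W. ex e0 n (F w))"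
  by (induction W rule: finite_induct) (auto simp: ex_zero ex_add)

lemma ex_const: "e0 \<in> Ep \<Longrightarrow> ex e0 n (\<lambda>p. c) = c"
proof (induction n)
  case 0
  then show ?case by simp
next
  case (Suc n)
  have "ex e0 n (Kop (\<lambda>p. c)) = ex e0 n (\<lambda>p. c)"
  proof (rule ex_cong)
    fix p assume "p \<in> reach e0 n"
    then have "last p \<in> Ep" by (rule reach_last)
    then show "Kop (\<lambda>p. c) p = c" unfolding Kop_def using stoch by (simp add: sum_distrib_right[symmetric])
  qed (use Suc in auto)
  then show ?case using Suc by simp
qed

lemma ex_prefix:
  assumes e0: "e0 \<in> Ep"
  shows "j \<le> n \<Longrightarrow> ex e0 n (\<lambda>p. F (take (Suc j) p)) = ex e0 j F"
proof (induction n)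
  case 0
  then have "j = 0" by simp
  then show ?case by simp
next
  case (Suc n)
  show ?case
  proof (cases "j = Suc n")
    case True
    have "ex e0 (Suc n) (\<lambda>p. F (take (Suc j) p)) = ex e0 (Suc n) F"
      by (rule ex_cong) (use True e0 reach_len in auto)
    then show ?thesis using True by simp
  next
    case False
    then have j: "j \<le> n" using Suc by simp
    have "ex e0 n (Kop (\<lambda>p. F (take (Suc j) p))) = ex e0 n (\<lambda>p. F (take (Suc j) p))"
    proof (rule ex_cong)
      fix p assume p: "p \<in> reach e0 n"
      have "\<And>e'. take (Suc j) (p @ [e']) = take (Suc j) p" using reach_len[OF p] j by simp
      then show "Kop (\<lambda>p. F (take (Suc j) p)) p = F (take (Suc j) p)"
        unfolding Kop_def using stoch[OF reach_last[OF p]] by (simp add: sum_distrib_right[symmetric])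
    qed (use e0 in auto)
    then show ?thesis using Suc.IH[OF j] by simp
  qed
qed

end


context mbs
begin

definition Mg :: "('e \<times> 'f \<Rightarrow> real) \<Rightarrow> ('e \<times> 'f) list \<Rightarrow> real" where
  "Mg h p = (\<Sum>i<length p - 1. h (p ! Suc i) - Qf h (p ! i))"

lemma Mg_snoc: "p \<noteq> [] \<Longrightarrow> Mg h (p @ [e']) = Mg h p + (h e' - Qf h (last p))"
proof -
  assume ne: "p \<noteq> []"
  then obtain k where k: "length p = Suc k" by (cases p) auto
  have "Mg h (p @ [e']) = (\<Sum>i<Suc k. h ((p @ [e']) ! Suc i) - Qf h ((p @ [e']) ! i))"
    unfolding Mg_def using k by simp
  also have "\<dots> = (\<Sum>i<k. h ((p @ [e']) ! Suc i) - Qf h ((p @ [e']) ! i)) + (h e' - Qf h (p ! k))"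
    using k by (simp add: nth_append)
  also have "(\<Sum>i<k. h ((p @ [e']) ! Suc i) - Qf h ((p @ [e']) ! i)) = Mg h p"
    unfolding Mg_def using k by (intro sum.cong) (auto simp: nth_append)
  also have "p ! k = last p" using k ne by (simp add: last_conv_nth)
  finally show ?thesis .
qed

lemma Qf_abs:
  assumes "e \<in> Ep" "\<And>e'. e' \<in> Ep \<Longrightarrow> \<bar>u e'\<bar> \<le> H"
  shows "\<bar>Qf u e\<bar> \<le> H"
proof -
  have "-H \<le> Qf u e \<and> Qf u e \<le> H"
  proof (rule Qf_bound[OF assms(1)])
    fix e' assume "e' \<in> Ep"
    then show "-H \<le> u e' \<and> u e' \<le> H" using assms(2)[of e'] by (simp add: abs_le_iff)
  qed
  then show ?thesis by (simp add: abs_le_iff)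
qed

lemma Mg_single: "Mg h [e] = 0"
  unfolding Mg_def by simp

lemma reach_nth: "p \<in> reach e0 n \<Longrightarrow> i < length p \<Longrightarrow> p ! i \<in> Ep"
  unfolding reach_def by auto

lemma Mg_bound:
  assumes p: "p \<in> reach e0 n" and hb: "\<And>e. e \<in> Ep \<Longrightarrow> \<bar>h e\<bar> \<le> H"
  shows "\<bar>Mg h p\<bar> \<le> real n * (2 * H)"
proof -
  have len: "length p - 1 = n" using reach_len[OF p] by simp
  have "\<bar>Mg h p\<bar> \<le> (\<Sum>i<n. \<bar>h (p ! Suc i) - Qf h (p ! i)\<bar>)" unfolding Mg_def len by (rule sum_abs)
  also have "\<dots> \<le> (\<Sum>i<n. 2 * H)"
  proof (rule sum_mono)
    fix i assume "i \<in> {..<n}"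
    then have i: "p ! Suc i \<in> Ep" "p ! i \<in> Ep" using reach_nth[OF p] reach_len[OF p] by auto
    have "\<bar>Qf h (p ! i)\<bar> \<le> H" using Qf_abs[OF i(2) hb] .
    then show "\<bar>h (p ! Suc i) - Qf h (p ! i)\<bar> \<le> 2 * H" using hb[OF i(1)] by linarith
  qed
  finally show ?thesis by simp
qed

lemma step_facts:
  assumes p: "p \<in> reach e0 n" and hb: "\<And>e. e \<in> Ep \<Longrightarrow> \<bar>h e\<bar> \<le> H"
  shows "(\<Sum>e'\<in>{e'\<in>Ep. sg e' = tg (last p)}. QP e' * (h e' - Qf h (last p))) = 0"
    and "\<And>e'. e' \<in> {e'\<in>Ep. sg e' = tg (last p)} \<Longrightarrow> \<bar>h e' - Qf h (last p)\<bar> \<le> 2 * H"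
proof -
  have l: "last p \<in> Ep" by (rule reach_last[OF p])
  show "(\<Sum>e'\<in>{e'\<in>Ep. sg e' = tg (last p)}. QP e' * (h e' - Qf h (last p))) = 0"
    using stoch[OF l] unfolding Qf_def
    by (simp add: right_diff_distrib sum_subtractf sum_distrib_right[symmetric])
  fix e' assume "e' \<in> {e'\<in>Ep. sg e' = tg (last p)}"
  then have e': "e' \<in> Ep" by simp
  have "\<bar>Qf h (last p)\<bar> \<le> H" using Qf_abs[OF l hb] .
  then show "\<bar>h e' - Qf h (last p)\<bar> \<le> 2 * H" using hb[OF e'] by linarith
qed

lemma step2:
  assumes p: "p \<in> reach e0 n" and hb: "\<And>e. e \<in> Ep \<Longrightarrow> \<bar>h e\<bar> \<le> H"
  shows "Kop (\<lambda>q. (Mg h q)\<^sup>2) p \<le> (Mg h p)\<^sup>2 + (2 * H)\<^sup>2"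
proof -
  define S where "S = {e'\<in>Ep. sg e' = tg (last p)}"
  define M where "M = Mg h p"
  define d where "d e' = h e' - Qf h (last p)" for e'
  define D where "D = 2 * H"
  have ne: "p \<noteq> []" using reach_len[OF p] by auto
  have s0: "(\<Sum>e'\<in>S. QP e' * d e') = 0" using step_facts(1)[where h=h and H=H, OF p hb] unfolding S_def d_def .
  have db: "\<And>e'. e' \<in> S \<Longrightarrow> \<bar>d e'\<bar> \<le> D" using step_facts(2)[where h=h and H=H, OF p hb] unfolding S_def d_def D_def by blast
  have s1: "(\<Sum>e'\<in>S. QP e') = 1" unfolding S_def by (rule stoch[OF reach_last[OF p]])
  have "Kop (\<lambda>q. (Mg h q)\<^sup>2) p = (\<Sum>e'\<in>S. QP e' * (M + d e')\<^sup>2)"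
    unfolding Kop_def S_def M_def d_def using Mg_snoc[OF ne] by simp
  also have "\<dots> \<le> (\<Sum>e'\<in>S. QP e' * (M\<^sup>2 + 2 * M * d e' + D\<^sup>2))"
  proof (rule sum_mono, rule mult_left_mono)
    fix e' assume e': "e' \<in> S"
    have "(d e')\<^sup>2 \<le> D\<^sup>2" using db[OF e'] by (metis abs_le_square_iff abs_of_nonneg abs_ge_zero order_trans power2_abs)
    then show "(M + d e')\<^sup>2 \<le> M\<^sup>2 + 2 * M * d e' + D\<^sup>2" by (simp add: power2_eq_square algebra_simps)
    show "0 \<le> QP e'" using e' QP_nn unfolding S_def by simp
  qed
  also have "\<dots> = M\<^sup>2 * (\<Sum>e'\<in>S. QP e') + 2 * M * (\<Sum>e'\<in>S. QP e' * d e') + D\<^sup>2 * (\<Sum>e'\<in>S. QP e')"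
    by (simp add: algebra_simps sum.distrib sum_distrib_left)
  also have "\<dots> = M\<^sup>2 + D\<^sup>2" using s0 s1 by simp
  finally show ?thesis unfolding M_def D_def .
qed

lemma step4:
  assumes p: "p \<in> reach e0 n" and hb: "\<And>e. e \<in> Ep \<Longrightarrow> \<bar>h e\<bar> \<le> H"
  shows "Kop (\<lambda>q. (Mg h q)^4) p \<le> (Mg h p)^4 + 6 * (2 * H)\<^sup>2 * (Mg h p)\<^sup>2 + 4 * \<bar>Mg h p\<bar> * (2 * H)^3 + (2 * H)^4"
proof -
  define S where "S = {e'\<in>Ep. sg e' = tg (last p)}"
  define M where "M = Mg h p"
  define d where "d e' = h e' - Qf h (last p)" for e'
  define D where "D = 2 * H"
  have ne: "p \<noteq> []" using reach_len[OF p] by auto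
  have s0: "(\<Sum>e'\<in>S. QP e' * d e') = 0" using step_facts(1)[where h=h and H=H, OF p hb] unfolding S_def d_def .
  have db: "\<And>e'. e' \<in> S \<Longrightarrow> \<bar>d e'\<bar> \<le> D" using step_facts(2)[where h=h and H=H, OF p hb] unfolding S_def d_def D_def by blast
  have s1: "(\<Sum>e'\<in>S. QP e') = 1" unfolding S_def by (rule stoch[OF reach_last[OF p]])
  define R where "R = M^4 + 6 * D\<^sup>2 * M\<^sup>2 + 4 * \<bar>M\<bar> * D^3 + D^4"
  have "Kop (\<lambda>q. (Mg h q)^4) p = (\<Sum>e'\<in>S. QP e' * (M + d e')^4)"
    unfolding Kop_def S_def M_def d_def using Mg_snoc[OF ne] by simp
  also have "\<dots> \<le> (\<Sum>e'\<in>S. QP e' * (R + 4 * M^3 * d e'))"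
  proof (rule sum_mono, rule mult_left_mono)
    fix e' assume e': "e' \<in> S"
    define x where "x = d e'"
    have ax: "\<bar>x\<bar> \<le> D" using db[OF e'] unfolding x_def .
    have D0: "0 \<le> D" using ax by linarith
    have x2: "x\<^sup>2 \<le> D\<^sup>2" using power_mono[OF ax, of 2] by simp
    have x3: "\<bar>x\<bar>^3 \<le> D^3" using power_mono[OF ax, of 3] by simp
    have "(x\<^sup>2)\<^sup>2 \<le> (D\<^sup>2)\<^sup>2" using power_mono[OF x2, of 2] by simp
    then have x4: "x^4 \<le> D^4" by (simp add: power_mult[symmetric])
    have t2: "6 * M\<^sup>2 * x\<^sup>2 \<le> 6 * M\<^sup>2 * D\<^sup>2" using x2 by (intro mult_left_mono) auto
    have "M * x^3 \<le> \<bar>M\<bar> * \<bar>x\<bar>^3" by (metis abs_ge_self abs_mult power_abs)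
    also have "\<dots> \<le> \<bar>M\<bar> * D^3" using x3 by (intro mult_left_mono) auto
    finally have t3: "M * x^3 \<le> \<bar>M\<bar> * D^3" .
    have "(M + x)^4 = M^4 + 4 * M^3 * x + 6 * M\<^sup>2 * x\<^sup>2 + 4 * (M * x^3) + x^4"
      by (simp add: power_def eval_nat_numeral algebra_simps)
    then show "(M + d e')^4 \<le> R + 4 * M^3 * d e'" unfolding R_def x_def[symmetric]
      using t2 t3 x4 by (simp add: algebra_simps)
    show "0 \<le> QP e'" using e' QP_nn unfolding S_def by simp
  qed
  also have "\<dots> = R * (\<Sum>e'\<in>S. QP e') + 4 * M^3 * (\<Sum>e'\<in>S. QP e' * d e')"
    by (simp add: algebra_simps sum.distrib sum_distrib_left)
  also have "\<dots> = R" using s0 s1 by simp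
  finally show ?thesis unfolding R_def M_def D_def by (simp add: algebra_simps)
qed

lemma ex2:
  assumes e0: "e0 \<in> Ep" and hb: "\<And>e. e \<in> Ep \<Longrightarrow> \<bar>h e\<bar> \<le> H"
  shows "ex e0 n (\<lambda>p. (Mg h p)\<^sup>2) \<le> real n * (2 * H)\<^sup>2"
proof (induction n)
  case 0
  then show ?case by (simp add: Mg_single)
next
  case (Suc n)
  have "ex e0 (Suc n) (\<lambda>p. (Mg h p)\<^sup>2) = ex e0 n (Kop (\<lambda>p. (Mg h p)\<^sup>2))" by simp
  also have "\<dots> \<le> ex e0 n (\<lambda>p. (Mg h p)\<^sup>2 + (2 * H)\<^sup>2)"
    by (rule ex_mono[OF step2[where h=h and H=H, OF _ hb] e0])
  also have "\<dots> = ex e0 n (\<lambda>p. (Mg h p)\<^sup>2) + (2 * H)\<^sup>2" by (simp add: ex_add ex_const[OF e0])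
  also have "\<dots> \<le> real (Suc n) * (2 * H)\<^sup>2" using Suc by (simp add: algebra_simps)
  finally show ?case .
qed

lemma ex4:
  assumes e0: "e0 \<in> Ep" and hb: "\<And>e. e \<in> Ep \<Longrightarrow> \<bar>h e\<bar> \<le> H" and H0: "H \<ge> 0"
  shows "ex e0 n (\<lambda>p. (Mg h p)^4) \<le> 11 * (2 * H)^4 * (real n)\<^sup>2"
proof (induction n)
  case 0
  then show ?case by (simp add: Mg_single)
next
  case (Suc n)
  define D where "D = 2 * H"
  have D0: "D \<ge> 0" using H0 D_def by simp
  have "ex e0 (Suc n) (\<lambda>p. (Mg h p)^4) = ex e0 n (Kop (\<lambda>p. (Mg h p)^4))" by simp
  also have "\<dots> \<le> ex e0 n (\<lambda>p. (Mg h p)^4 + 6 * D\<^sup>2 * (Mg h p)\<^sup>2 + (4 * (real n * D) * D^3 + D^4))"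
  proof (rule ex_mono[OF _ e0])
    fix p assume p: "p \<in> reach e0 n"
    have "\<bar>Mg h p\<bar> \<le> real n * D" using Mg_bound[where h=h and H=H, OF p hb] D_def by simp
    then have "4 * \<bar>Mg h p\<bar> * D^3 \<le> 4 * (real n * D) * D^3" using D0 by (intro mult_right_mono) auto
    then show "Kop (\<lambda>p. (Mg h p)^4) p \<le> (Mg h p)^4 + 6 * D\<^sup>2 * (Mg h p)\<^sup>2 + (4 * (real n * D) * D^3 + D^4)"
      using step4[where h=h and H=H, OF p hb] unfolding D_def by linarith
  qed
  also have "\<dots> = ex e0 n (\<lambda>p. (Mg h p)^4) + 6 * D\<^sup>2 * ex e0 n (\<lambda>p. (Mg h p)\<^sup>2) + (4 * (real n * D) * D^3 + D^4)"
    by (simp add: ex_add ex_scale ex_const[OF e0])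
  also have "\<dots> \<le> 11 * D^4 * (real n)\<^sup>2 + 6 * D\<^sup>2 * (real n * D\<^sup>2) + (4 * (real n * D) * D^3 + D^4)"
    using Suc ex2[where h=h and H=H and n=n, OF e0 hb] D0 unfolding D_def by (intro add_mono mult_left_mono) auto
  also have "\<dots> \<le> 11 * D^4 * (real (Suc n))\<^sup>2"
  proof -
    have "0 \<le> D^4 * (12 * real n + 10)" using D0 by simp
    then show ?thesis by (simp add: power2_eq_square power_def eval_nat_numeral algebra_simps)
  qed
  finally show ?case unfolding D_def .
qed

end


lemma tail_sum:
  fixes A :: nat
  assumes A: "A \<ge> 1"
  shows "(\<Sum>j<N. if Suc j \<le> A then 0 else 1 / (real (Suc j))\<^sup>2) \<le> (if N \<le> A then 0 else 1 / real A - 1 / real N)"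
proof (induction N)
  case 0
  then show ?case by simp
next
  case (Suc N)
  show ?case
  proof (cases "Suc N \<le> A")
    case True
    then show ?thesis using Suc by simp
  next
    case False
    then have NA: "A \<le> N" by simp
    have prev: "(\<Sum>j<N. if Suc j \<le> A then 0 else 1 / (real (Suc j))\<^sup>2) \<le> 1 / real A - 1 / real N"
      using Suc NA by (cases "N = A") auto
    have N1: "real N \<ge> 1" using NA A by simp
    have "1 / (real (Suc N))\<^sup>2 \<le> 1 / real N - 1 / real (Suc N)"
    proof -
      have "1 / real N - 1 / real (Suc N) = 1 / (real N * real (Suc N))"
        using N1 by (simp add: field_simps)
      also have "1 / (real (Suc N))\<^sup>2 \<le> 1 / (real N * real (Suc N))"
        using N1 by (intro divide_left_mono) (auto simp: power2_eq_square intro!: mult_right_mono)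
      finally show ?thesis by simp
    qed
    then show ?thesis using prev False by simp
  qed
qed

lemma tail_sum':
  fixes A :: nat
  assumes A: "A \<ge> 1" and C: "C \<ge> 0"
  shows "(\<Sum>j\<le>N. if real (Suc j) \<le> real A then 0 else C / (real (Suc j))\<^sup>2) \<le> C / real A"
proof -
  have "(\<Sum>j\<le>N. if real (Suc j) \<le> real A then 0 else C / (real (Suc j))\<^sup>2)
      = (\<Sum>j<Suc N. C * (if Suc j \<le> A then 0 else 1 / (real (Suc j))\<^sup>2))"
    unfolding lessThan_Suc_atMost by (intro sum.cong) (auto simp del: of_nat_Suc)
  also have "\<dots> = C * (\<Sum>j<Suc N. if Suc j \<le> A then 0 else 1 / (real (Suc j))\<^sup>2)"
    by (rule sum_distrib_left[symmetric])
  also have "\<dots> \<le> C * (1 / real A)"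
  proof (rule mult_left_mono[OF _ C])
    have "(if Suc N \<le> A then 0 else 1 / real A - 1 / real (Suc N)) \<le> 1 / real A" by auto
    then show "(\<Sum>j<Suc N. if Suc j \<le> A then 0 else 1 / (real (Suc j))\<^sup>2) \<le> 1 / real A"
      using tail_sum[OF A, of "Suc N"] by linarith
  qed
  finally show ?thesis by simp
qed

context mbs
begin

definition Sp :: "('e \<times> 'f) list \<Rightarrow> real" where
  "Sp p = (\<Sum>i<length p. fM (p ! i))"

lemma Z_path:
  assumes e0: "e0 \<in> Ep" and p: "p \<in> reach e0 n"
  shows "i < length p \<Longrightarrow> Z (p ! i) = Z e0"
proof (induction i)
  case 0
  then show ?case using p unfolding reach_def by auto
next
  case (Suc i)
  have ch: "tg (p ! i) = sg (p ! Suc i)" using p Suc.prems unfolding reach_def by auto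
  have "Z (p ! Suc i) = Z (p ! i)"
    by (rule Z_const) (use reach_nth[OF p] Suc.prems ch in auto)
  then show ?case using Suc by simp
qed

lemma Sp_le_len: "Sp p \<le> real (length p)"
  unfolding Sp_def using sum_mono[of "{..<length p}" "\<lambda>i. fM (p ! i)" "\<lambda>_. 1"] fM_bound by auto

lemma Sp_nn: "Sp p \<ge> 0"
  unfolding Sp_def using fM_bound by (intro sum_nonneg) auto

lemma Sp_bound:
  assumes e0: "e0 \<in> Ep" and p: "p \<in> reach e0 n"
    and ab: "\<And>e. e \<in> Ep \<Longrightarrow> \<bar>a e\<bar> \<le> \<eta>"
    and dec: "\<And>e. e \<in> Ep \<Longrightarrow> fM e = Z e + a e + (h e - Qf h e)"
    and hb: "\<And>e. e \<in> Ep \<Longrightarrow> \<bar>h e\<bar> \<le> H"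
  shows "Sp p \<le> real (Suc n) * (Z e0 + \<eta>) + 2 * H + Mg h p"
proof -
  have len: "length p = Suc n" by (rule reach_len[OF p])
  have inE: "\<And>i. i < Suc n \<Longrightarrow> p ! i \<in> Ep" using reach_nth[OF p] len by simp
  have "Sp p = (\<Sum>i<Suc n. Z e0 + a (p ! i) + (h (p ! i) - Qf h (p ! i)))"
    unfolding Sp_def len using dec inE Z_path[OF e0 p] len by (intro sum.cong) auto
  also have "\<dots> = real (Suc n) * Z e0 + (\<Sum>i<Suc n. a (p ! i)) + (\<Sum>i<Suc n. h (p ! i) - Qf h (p ! i))"
    by (simp add: sum.distrib)
  also have "(\<Sum>i<Suc n. h (p ! i) - Qf h (p ! i)) = h (p ! 0) - Qf h (p ! n) + Mg h p"
  proof -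
    have "(\<Sum>i<Suc n. h (p ! i)) = h (p ! 0) + (\<Sum>i<n. h (p ! Suc i))" by (rule sum.lessThan_Suc_shift)
    moreover have "(\<Sum>i<Suc n. Qf h (p ! i)) = (\<Sum>i<n. Qf h (p ! i)) + Qf h (p ! n)" by simp
    moreover have "Mg h p = (\<Sum>i<n. h (p ! Suc i)) - (\<Sum>i<n. Qf h (p ! i))"
      unfolding Mg_def len by (simp add: sum_subtractf)
    ultimately show ?thesis by (simp add: sum_subtractf)
  qed
  finally have eq: "Sp p = real (Suc n) * Z e0 + (\<Sum>i<Suc n. a (p ! i)) + (h (p ! 0) - Qf h (p ! n) + Mg h p)" .
  have sa: "(\<Sum>i<Suc n. a (p ! i)) \<le> real (Suc n) * \<eta>"
  proof -
    have "\<And>i. i \<in> {..<Suc n} \<Longrightarrow> a (p ! i) \<le> \<eta>"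
    proof -
      fix i assume "i \<in> {..<Suc n}"
      then have "\<bar>a (p ! i)\<bar> \<le> \<eta>" using ab inE by simp
      then show "a (p ! i) \<le> \<eta>" by (simp add: abs_le_iff)
    qed
    then have "(\<Sum>i<Suc n. a (p ! i)) \<le> (\<Sum>i<Suc n. \<eta>)" by (rule sum_mono)
    then show ?thesis by simp
  qed
  have h0: "h (p ! 0) \<le> H" using hb[OF inE[of 0]] by (simp add: abs_le_iff)
  have q: "- Qf h (p ! n) \<le> H" using Qf_abs[OF inE[of n] hb] by (simp add: abs_le_iff)
  have d: "real (Suc n) * (Z e0 + \<eta>) = real (Suc n) * Z e0 + real (Suc n) * \<eta>" by (simp add: algebra_simps)
  show ?thesis using eq sa h0 q d by linarith
qed

end


context mbs
begin

lemma ex_union: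
  assumes e0: "e0 \<in> Ep"
  shows "ex e0 N (\<lambda>p. if \<exists>j\<le>N. B j (take (Suc j) p) then 1 else 0)
         \<le> (\<Sum>j\<le>N. ex e0 j (\<lambda>q. if B j q then 1 else 0))"
proof -
  have "ex e0 N (\<lambda>p. if \<exists>j\<le>N. B j (take (Suc j) p) then 1 else 0)
        \<le> ex e0 N (\<lambda>p. \<Sum>j\<le>N. (if B j (take (Suc j) p) then 1 else 0))"
  proof (rule ex_mono[OF _ e0])
    fix p
    show "(if \<exists>j\<le>N. B j (take (Suc j) p) then 1 else 0) \<le> (\<Sum>j\<le>N. (if B j (take (Suc j) p) then 1 else 0 :: real))"
    proof (cases "\<exists>j\<le>N. B j (take (Suc j) p)")
      case True
      then obtain j where j: "j \<le> N" "B j (take (Suc j) p)" by blast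
      have "(if B j (take (Suc j) p) then 1 else 0 :: real) \<le> (\<Sum>j\<le>N. (if B j (take (Suc j) p) then 1 else 0))"
        using j by (intro member_le_sum) auto
      then show ?thesis using True j by simp
    next
      case False
      then show ?thesis by (simp add: sum_nonneg)
    qed
  qed
  also have "\<dots> = (\<Sum>j\<le>N. ex e0 N (\<lambda>p. if B j (take (Suc j) p) then 1 else 0))"
    by (rule ex_sum) simp
  also have "\<dots> = (\<Sum>j\<le>N. ex e0 j (\<lambda>q. if B j q then 1 else 0))"
    by (intro sum.cong refl ex_prefix[OF e0]) auto
  finally show ?thesis .
qed

lemma ex_bad:
  assumes e0: "e0 \<in> Ep" and Zc: "Z e0 \<le> cval" and s: "s > 0"
    and ab: "\<And>e. e \<in> Ep \<Longrightarrow> \<bar>a e\<bar> \<le> s / 2"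
    and dec: "\<And>e. e \<in> Ep \<Longrightarrow> fM e = Z e + a e + (h e - Qf h e)"
    and hb: "\<And>e. e \<in> Ep \<Longrightarrow> \<bar>h e\<bar> \<le> H" and H0: "H \<ge> 0"
    and A: "2 * H \<le> A"
  shows "ex e0 n (\<lambda>p. if Sp p > real (Suc n) * (cval + s) + A then 1 else 0)
         \<le> (if real (Suc n) \<le> A then 0 else 176 * (2 * H)^4 / s^4 / (real (Suc n))\<^sup>2)"
proof (cases "real (Suc n) \<le> A")
  case True
  have "ex e0 n (\<lambda>p. if Sp p > real (Suc n) * (cval + s) + A then 1 else 0) = ex e0 n (\<lambda>p. 0)"
  proof (rule ex_cong[OF _ e0])
    fix p assume p: "p \<in> reach e0 n"
    have "Sp p \<le> real (Suc n)" using Sp_le_len[of p] reach_len[OF p] by simp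
    moreover have "real (Suc n) * (cval + s) > 0" using s cval_nn by (intro mult_pos_pos) auto
    ultimately show "(if Sp p > real (Suc n) * (cval + s) + A then 1 else 0) = (0::real)" using True by auto
  qed
  then show ?thesis using True by (simp add: ex_zero)
next
  case False
  define t where "t = real (Suc n) * s / 2"
  have t0: "t > 0" unfolding t_def using s by simp
  have "ex e0 n (\<lambda>p. if Sp p > real (Suc n) * (cval + s) + A then 1 else 0)
        \<le> ex e0 n (\<lambda>p. (1 / t^4) * (Mg h p)^4)"
  proof (rule ex_mono[OF _ e0])
    fix p assume p: "p \<in> reach e0 n"
    show "(if Sp p > real (Suc n) * (cval + s) + A then 1 else 0) \<le> (1 / t^4) * (Mg h p)^4"
    proof (cases "Sp p > real (Suc n) * (cval + s) + A")
      case True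
      have "Sp p \<le> real (Suc n) * (Z e0 + s / 2) + 2 * H + Mg h p"
        by (rule Sp_bound[OF e0 p ab dec hb])
      moreover have "real (Suc n) * (Z e0 + s / 2) \<le> real (Suc n) * (cval + s / 2)"
        using Zc by (intro mult_left_mono) auto
      moreover have "real (Suc n) * (cval + s) = real (Suc n) * (cval + s / 2) + t"
        unfolding t_def by (simp add: algebra_simps)
      ultimately have "Mg h p \<ge> t" using True A by linarith
      then have "t^4 \<le> (Mg h p)^4" using t0 by (intro power_mono) auto
      then show ?thesis using True t0 by simp
    next
      case False
      then show ?thesis using t0 by simp
    qed
  qed
  also have "\<dots> = (1 / t^4) * ex e0 n (\<lambda>p. (Mg h p)^4)" by (rule ex_scale)
  also have "\<dots> \<le> (1 / t^4) * (11 * (2 * H)^4 * (real n)\<^sup>2)"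
    using ex4[where h=h and H=H and n=n, OF e0 hb H0] t0 by (intro mult_left_mono) auto
  also have "\<dots> \<le> (1 / t^4) * (11 * (2 * H)^4 * (real (Suc n))\<^sup>2)"
    using t0 H0 by (intro mult_left_mono) (auto intro!: power_mono)
  also have "\<dots> = 176 * (2 * H)^4 / s^4 / (real (Suc n))\<^sup>2"
  proof -
    define x where "x = real (Suc n)"
    define D where "D = (2 * H)^4"
    have x0: "x > 0" unfolding x_def by simp
    have t4: "t^4 = x\<^sup>2 * x\<^sup>2 * s^4 / 16" unfolding t_def x_def[symmetric]
      by (simp add: power_mult_distrib power_divide power2_eq_square power_def eval_nat_numeral)
    have "(1 / t^4) * (11 * D * x\<^sup>2) = 176 * D / s^4 / x\<^sup>2"
      unfolding t4 using x0 s by (simp add: field_simps power2_eq_square)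
    then show ?thesis unfolding x_def D_def .
  qed
  finally show ?thesis using False by simp
qed

lemma good_prob:
  assumes e0: "e0 \<in> Ep" and Zc: "Z e0 \<le> cval" and s: "s > 0"
  shows "\<exists>C\<ge>0. \<exists>A0::nat. \<forall>A\<ge>A0. \<forall>N. ex e0 N (\<lambda>p. if (\<forall>j\<le>N. Sp (take (Suc j) p) \<le> real (Suc j) * (cval + s) + real A) then 1 else 0) \<ge> 1 - C / real A"
proof -
  obtain a h where ab: "\<forall>e\<in>Ep. \<bar>a e\<bar> \<le> s / 2" and dec: "\<forall>e\<in>Ep. fM e = Z e + a e + (h e - Qf h e)"
    using decomp[of "s / 2"] s by auto
  define H where "H = (\<Sum>e\<in>Ep. \<bar>h e\<bar>)"
  have hb: "\<And>e. e \<in> Ep \<Longrightarrow> \<bar>h e\<bar> \<le> H" unfolding H_def using finEp by (intro member_le_sum) auto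
  have H0: "H \<ge> 0" unfolding H_def by (intro sum_nonneg) auto
  define C where "C = 176 * (2 * H)^4 / s^4"
  have C0: "C \<ge> 0" unfolding C_def using s H0 by simp
  define A0 where "A0 = max 1 (nat \<lceil>2 * H\<rceil>)"
  show ?thesis
  proof (intro exI[of _ C] conjI C0 exI[of _ A0] allI impI)
    fix A :: nat and N assume AA: "A0 \<le> A"
    have A1: "A \<ge> 1" using AA unfolding A0_def by simp
    have A2: "2 * H \<le> real A" using AA unfolding A0_def by linarith
    define B where "B j q = (Sp q > real (Suc j) * (cval + s) + real A)" for j q
    have "ex e0 N (\<lambda>p. if \<exists>j\<le>N. B j (take (Suc j) p) then 1 else 0)
          \<le> (\<Sum>j\<le>N. ex e0 j (\<lambda>q. if B j q then 1 else 0))" by (rule ex_union[OF e0])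
    also have "\<dots> \<le> (\<Sum>j\<le>N. if real (Suc j) \<le> real A then 0 else C / (real (Suc j))\<^sup>2)"
      unfolding B_def C_def
      by (intro sum_mono ex_bad[where h=h and H=H, OF e0 Zc s _ _ hb H0 A2]) (use ab dec in auto)
    also have "\<dots> \<le> C / real A" by (rule tail_sum'[OF A1 C0])
    finally have bad: "ex e0 N (\<lambda>p. if \<exists>j\<le>N. B j (take (Suc j) p) then 1 else 0) \<le> C / real A" .
    have "ex e0 N (\<lambda>p. if (\<forall>j\<le>N. Sp (take (Suc j) p) \<le> real (Suc j) * (cval + s) + real A) then 1 else 0)
          = ex e0 N (\<lambda>p. 1 + (-1) * (if \<exists>j\<le>N. B j (take (Suc j) p) then 1 else 0))"
      by (rule arg_cong[where f="ex e0 N"]) (auto simp: B_def fun_eq_iff not_le)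
    also have "\<dots> = 1 - ex e0 N (\<lambda>p. if \<exists>j\<le>N. B j (take (Suc j) p) then 1 else 0)"
      unfolding ex_add ex_scale ex_const[OF e0] by simp
    finally show "1 - C / real A \<le> ex e0 N (\<lambda>p. if (\<forall>j\<le>N. Sp (take (Suc j) p) \<le> real (Suc j) * (cval + s) + real A) then 1 else 0)"
      using bad by linarith
  qed
qed

end


context mbs
begin

lemma PY_nn: "f \<in> edges GY \<Longrightarrow> PY f \<ge> 0"
  using stY unfolding stationary_mc_def by auto

lemma mcpi_pos: "w \<in> verts GY \<Longrightarrow> mc_pi GY PY w > 0"
  using stY unfolding stationary_mc_def by auto

lemma srcY: "f \<in> edges GY \<Longrightarrow> src GY f \<in> verts GY"
  using wfY unfolding wf_lgraph_def by auto

lemma mcQ_nn: "f \<in> edges GY \<Longrightarrow> mc_Q GY PY f \<ge> 0"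
  unfolding mc_Q_def using PY_nn mcpi_pos[OF srcY] by (simp add: less_imp_le)

definition KY :: "('f list \<Rightarrow> real) \<Rightarrow> 'f list \<Rightarrow> real" where
  "KY F q = (\<Sum>f'\<in>{f'\<in>edges GY. src GY f' = tgt GY (last q)}. mc_Q GY PY f' * F (q @ [f']))"

primrec exY :: "'f \<Rightarrow> nat \<Rightarrow> ('f list \<Rightarrow> real) \<Rightarrow> real" where
  "exY y0 0 F = F [y0]"
| "exY y0 (Suc n) F = exY y0 n (KY F)"

lemma finEY: "finite (edges GY)" using wfY unfolding wf_lgraph_def by auto

lemma KopY:
  assumes p: "p \<in> reach e0 n"
  shows "Kop (\<lambda>q. F (map snd q)) p = KY F (map snd p)"
proof -
  define e where "e = last p"
  have e: "e \<in> Ep" unfolding e_def by (rule reach_last[OF p])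
  have pne: "p \<noteq> []" using reach_len[OF p] by auto
  define S where "S = {e'\<in>Ep. sg e' = tg e}"
  define T where "T = {f'\<in>edges GY. src GY f' = tgt GY (snd e)}"
  define pi where "pi = piP (tg e)"
  have pi0: "pi > 0" unfolding pi_def by (rule piP_tg[OF e])
  obtain e'' where e'': "e'' \<in> Ep" "sg e'' = tg e" using Ep_succ[OF e] by blast
  have finS: "finite S" unfolding S_def using finEp by simp
  have finT: "finite T" unfolding T_def using finEY by simp
  have ST: "snd ` S \<subseteq> T" unfolding S_def T_def using Ep_E by (auto simp: E_def sg_def tg_def)
  have "Kop (\<lambda>q. F (map snd q)) p = (\<Sum>e'\<in>S. P e' / pi * F (map snd p @ [snd e']))"
    unfolding Kop_def S_def e_def[symmetric] pi_def QP_def by (intro sum.cong) auto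
  also have "\<dots> = (\<Sum>f'\<in>T. \<Sum>e'\<in>{e'\<in>S. snd e' = f'}. P e' / pi * F (map snd p @ [snd e']))"
    by (rule sum.group[OF finS finT ST, symmetric])
  also have "\<dots> = (\<Sum>f'\<in>T. mc_Q GY PY f' * F (map snd p @ [f']))"
  proof (intro sum.cong refl)
    fix f' assume f': "f' \<in> T"
    have "(\<Sum>e'\<in>{e'\<in>S. snd e' = f'}. P e' / pi * F (map snd p @ [snd e']))
          = (\<Sum>e'\<in>{e'\<in>S. snd e' = f'}. P e') / pi * F (map snd p @ [f'])"
      by (simp add: sum_divide_distrib sum_distrib_right)
    also have "(\<Sum>e'\<in>{e'\<in>S. snd e' = f'}. P e') = mc_Q GY PY f' * pi"
    proof -
      have "(\<Sum>e'\<in>{e'\<in>S. snd e' = f'}. P e') = (\<Sum>e'\<in>{e'\<in>Ep. sg e' = tg e \<and> snd e' = f'}. P e')"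
        unfolding S_def by (intro sum.cong) auto
      also have "\<dots> = (\<Sum>e'\<in>{e'\<in>E. sg e' = tg e \<and> snd e' = f'}. P e')" by (rule sum_Ep1)
      also have "\<dots> = (\<Sum>e'\<in>{e'\<in>E. snd e' = snd (fst e'', f') \<and> src GX (fst e') = src GX (fst (fst e'', f'))}. P e')"
        using f' e'' unfolding T_def by (intro sum.cong) (auto simp: sg_def tg_def)
      also have "\<dots> = mc_Q GY PY (snd (fst e'', f')) * (\<Sum>e'\<in>{e'\<in>E. src GY (snd e') = src GY (snd (fst e'', f')) \<and> src GX (fst e') = src GX (fst (fst e'', f'))}. P e')"
      proof (rule cond5)
        show "(fst e'', f') \<in> E" using Ep_E[OF e''(1)] f' unfolding T_def E_def by auto
      qed
      also have "(\<Sum>e'\<in>{e'\<in>E. src GY (snd e') = src GY (snd (fst e'', f')) \<and> src GX (fst e') = src GX (fst (fst e'', f'))}. P e') = pi"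
        unfolding pi_def piP_def using f' e'' unfolding T_def by (intro sum.cong) (auto simp: sg_def tg_def)
      finally show ?thesis by simp
    qed
    finally show "(\<Sum>e'\<in>{e'\<in>S. snd e' = f'}. P e' / pi * F (map snd p @ [snd e'])) = mc_Q GY PY f' * F (map snd p @ [f'])"
      using pi0 by simp
  qed
  also have "\<dots> = KY F (map snd p)"
    unfolding KY_def T_def e_def using pne by (simp add: last_map)
  finally show ?thesis .
qed

lemma ex_exY:
  assumes e0: "e0 \<in> Ep"
  shows "ex e0 n (\<lambda>p. F (map snd p)) = exY (snd e0) n F"
proof (induction n arbitrary: F)
  case 0
  then show ?case by simp
next
  case (Suc n)
  have "ex e0 n (Kop (\<lambda>p. F (map snd p))) = ex e0 n (\<lambda>p. KY F (map snd p))"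
    by (rule ex_cong[OF _ e0]) (rule KopY)
  also have "\<dots> = exY (snd e0) n (KY F)" by (rule Suc.IH)
  finally show ?case by simp
qed

end


context mbs
begin

definition Gp :: "'f \<Rightarrow> nat \<Rightarrow> 'f list set" where
  "Gp y0 n = {es \<in> gpaths GY (Suc n). es ! 0 = y0}"

definition Wt :: "'f list \<Rightarrow> real" where
  "Wt es = (\<Prod>i\<in>{1..<length es}. mc_Q GY PY (es ! i))"

lemma gpaths_fin: "finite (gpaths GY n)"
proof -
  have "gpaths GY n \<subseteq> {es. set es \<subseteq> edges GY \<and> length es = n}" unfolding gpaths_def by auto
  then show ?thesis using finite_lists_length_eq[OF finEY] by (rule finite_subset)
qed

lemma Gp_fin: "finite (Gp y0 n)"
  unfolding Gp_def using gpaths_fin by simp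

lemma Gp0: "y0 \<in> edges GY \<Longrightarrow> Gp y0 0 = {[y0]}"
proof
  assume y0: "y0 \<in> edges GY"
  show "Gp y0 0 \<subseteq> {[y0]}"
  proof
    fix es assume "es \<in> Gp y0 0"
    then have "length es = 1" "es ! 0 = y0" unfolding Gp_def gpaths_def by auto
    then show "es \<in> {[y0]}" by (cases es) auto
  qed
  show "{[y0]} \<subseteq> Gp y0 0" using y0 unfolding Gp_def gpaths_def by auto
qed

lemma Gp_Suc: "Gp y0 (Suc n) = (\<lambda>(es, f). es @ [f]) ` (SIGMA es:Gp y0 n. {f\<in>edges GY. src GY f = tgt GY (last es)})"
proof
  show "Gp y0 (Suc n) \<subseteq> (\<lambda>(es, f). es @ [f]) ` (SIGMA es:Gp y0 n. {f\<in>edges GY. src GY f = tgt GY (last es)})"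
  proof
    fix es' assume es': "es' \<in> Gp y0 (Suc n)"
    then have len: "length es' = Suc (Suc n)" unfolding Gp_def gpaths_def by auto
    define es where "es = butlast es'"
    define f where "f = last es'"
    have ne: "es' \<noteq> []" using len by auto
    have eq: "es' = es @ [f]" unfolding es_def f_def using ne by simp
    have lenes: "length es = Suc n" unfolding es_def using len by simp
    have chain: "\<And>i. Suc i < Suc (Suc n) \<Longrightarrow> tgt GY (es' ! i) = src GY (es' ! Suc i)"
      using es' unfolding Gp_def gpaths_def by auto
    have "es \<in> Gp y0 n"
      using es' lenes chain unfolding Gp_def gpaths_def eq by (auto simp: nth_append)
    moreover have "f \<in> edges GY" using es' ne unfolding Gp_def gpaths_def f_def by auto
    moreover have "src GY f = tgt GY (last es)"
    proof -
      have "tgt GY (es' ! n) = src GY (es' ! Suc n)" using chain by simp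
      moreover have "es' ! n = last es"
      proof -
        have "es \<noteq> []" using lenes by auto
        then show ?thesis unfolding eq using lenes by (simp add: nth_append last_conv_nth)
      qed
      moreover have "es' ! Suc n = f" unfolding eq using lenes by (simp add: nth_append)
      ultimately show ?thesis by simp
    qed
    ultimately show "es' \<in> (\<lambda>(es, f). es @ [f]) ` (SIGMA es:Gp y0 n. {f\<in>edges GY. src GY f = tgt GY (last es)})"
      unfolding eq by force
  qed
  show "(\<lambda>(es, f). es @ [f]) ` (SIGMA es:Gp y0 n. {f\<in>edges GY. src GY f = tgt GY (last es)}) \<subseteq> Gp y0 (Suc n)"
  proof clarify
    fix es f assume es: "es \<in> Gp y0 n" and f: "f \<in> edges GY" "src GY f = tgt GY (last es)"
    have lenes: "length es = Suc n" using es unfolding Gp_def gpaths_def by auto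
    have "tgt GY ((es @ [f]) ! i) = src GY ((es @ [f]) ! Suc i)" if i: "Suc i < Suc (Suc n)" for i
    proof (cases "Suc i < Suc n")
      case True
      then show ?thesis using es lenes unfolding Gp_def gpaths_def by (auto simp: nth_append)
    next
      case False
      then have "i = n" using i by simp
      moreover have "last es = es ! n" using lenes by (cases "es = []") (auto simp: last_conv_nth)
      ultimately show ?thesis using f lenes by (simp add: nth_append)
    qed
    then show "es @ [f] \<in> Gp y0 (Suc n)" using es f lenes unfolding Gp_def gpaths_def by (auto simp: nth_append)
  qed
qed

lemma Gp_inj: "inj_on (\<lambda>(es, f). es @ [f]) (SIGMA es:Gp y0 n. B es)"
  by (rule inj_onI) auto

lemma Wt_snoc: "es \<noteq> [] \<Longrightarrow> Wt (es @ [f]) = Wt es * mc_Q GY PY f"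
proof -
  assume "es \<noteq> []"
  then have le: "1 \<le> length es" by (cases es) auto
  have "Wt (es @ [f]) = (\<Prod>i\<in>{1..<Suc (length es)}. mc_Q GY PY ((es @ [f]) ! i))"
    unfolding Wt_def by simp
  also have "\<dots> = (\<Prod>i\<in>{1..<length es}. mc_Q GY PY ((es @ [f]) ! i)) * mc_Q GY PY ((es @ [f]) ! length es)"
    by (rule prod.atLeastLessThan_Suc[OF le])
  finally have "Wt (es @ [f]) = (\<Prod>i\<in>{1..<length es}. mc_Q GY PY ((es @ [f]) ! i)) * mc_Q GY PY ((es @ [f]) ! length es)" .
  also have "(\<Prod>i\<in>{1..<length es}. mc_Q GY PY ((es @ [f]) ! i)) = Wt es"
    unfolding Wt_def by (intro prod.cong) (auto simp: nth_append)
  finally show ?thesis by simp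
qed

lemma exY_sum: "y0 \<in> edges GY \<Longrightarrow> exY y0 n F = (\<Sum>es\<in>Gp y0 n. Wt es * F es)"
proof (induction n arbitrary: F)
  case 0
  then show ?case by (simp add: Gp0 Wt_def)
next
  case (Suc n)
  define T where "T es = {f\<in>edges GY. src GY f = tgt GY (last es)}" for es
  have ne: "\<And>es. es \<in> Gp y0 n \<Longrightarrow> es \<noteq> []" unfolding Gp_def gpaths_def by auto
  have "exY y0 (Suc n) F = (\<Sum>es\<in>Gp y0 n. Wt es * KY F es)" using Suc by simp
  also have "\<dots> = (\<Sum>es\<in>Gp y0 n. \<Sum>f\<in>T es. Wt (es @ [f]) * F (es @ [f]))"
  proof (intro sum.cong refl)
    fix es assume es: "es \<in> Gp y0 n"
    have "Wt es * KY F es = (\<Sum>f\<in>T es. Wt es * (mc_Q GY PY f * F (es @ [f])))"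
      unfolding KY_def T_def by (rule sum_distrib_left)
    also have "\<dots> = (\<Sum>f\<in>T es. Wt (es @ [f]) * F (es @ [f]))"
      using Wt_snoc[OF ne[OF es]] by (intro sum.cong refl) (simp only: mult.assoc)
    finally show "Wt es * KY F es = (\<Sum>f\<in>T es. Wt (es @ [f]) * F (es @ [f]))" .
  qed
  also have "\<dots> = (\<Sum>(es, f)\<in>(SIGMA es:Gp y0 n. T es). Wt (es @ [f]) * F (es @ [f]))"
    by (rule sum.Sigma) (auto simp: Gp_fin T_def finEY)
  also have "\<dots> = (\<Sum>es'\<in>(\<lambda>(es, f). es @ [f]) ` (SIGMA es:Gp y0 n. T es). Wt es' * F es')"
  proof -
    have r: "(\<Sum>es'\<in>(\<lambda>(es, f). es @ [f]) ` (SIGMA es:Gp y0 n. T es). Wt es' * F es')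
       = sum ((\<lambda>es'. Wt es' * F es') \<circ> (\<lambda>(es, f). es @ [f])) (SIGMA es:Gp y0 n. T es)"
      by (rule sum.reindex[OF Gp_inj])
    show ?thesis unfolding r by (simp add: comp_def case_prod_unfold)
  qed
  also have "(\<lambda>(es, f). es @ [f]) ` (SIGMA es:Gp y0 n. T es) = Gp y0 (Suc n)"
    unfolding Gp_Suc T_def ..
  finally show ?case .
qed

lemma Wt_nn: assumes "es \<in> gpaths GY m" shows "Wt es \<ge> 0"
  unfolding Wt_def
proof (rule prod_nonneg)
  fix i assume "i \<in> {1..<length es}"
  then have il: "i < length es" by simp
  have sub: "set es \<subseteq> edges GY" using assms unfolding gpaths_def by simp
  have "es ! i \<in> set es" using il by (rule nth_mem)
  then have "es ! i \<in> edges GY" using sub by (rule subsetD[rotated])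
  then show "mc_Q GY PY (es ! i) \<ge> 0" by (rule mcQ_nn)
qed

lemma exY_nn:
  assumes y0: "y0 \<in> edges GY" and Fnn: "\<And>q. F q \<ge> 0"
  shows "exY y0 n F \<ge> 0"
proof -
  have "(\<Sum>es\<in>Gp y0 n. Wt es * F es) \<ge> 0"
  proof (rule sum_nonneg)
    fix es assume "es \<in> Gp y0 n"
    then have "es \<in> gpaths GY (Suc n)" unfolding Gp_def by simp
    then have "Wt es \<ge> 0" by (rule Wt_nn)
    then show "Wt es * F es \<ge> 0" using Fnn[of es] by simp
  qed
  then show ?thesis using exY_sum[OF y0] by simp
qed

lemma hmm_eq:
  assumes w: "length w = Suc n"
  shows "hmm_cyl GY PY w = (\<Sum>y0\<in>edges GY. PY y0 * exY y0 n (\<lambda>q. if map (lab GY) q = w then 1 else 0))"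
proof -
  define GW where "GW = {es\<in>gpaths GY (length w). map (lab GY) es = w}"
  have finGW: "finite GW" unfolding GW_def using gpaths_fin by simp
  have img: "(\<lambda>es. es ! 0) ` GW \<subseteq> edges GY"
    unfolding GW_def gpaths_def using w by (auto simp: nth_mem subset_iff)
  have wne: "w \<noteq> []" using w by auto
  have "hmm_cyl GY PY w = (\<Sum>es\<in>GW. PY (es ! 0) * (\<Prod>i\<in>{1..<length w}. mc_Q GY PY (es ! i)))"
    unfolding hmm_cyl_def GW_def using wne by simp
  also have "\<dots> = (\<Sum>es\<in>GW. PY (es ! 0) * Wt es)"
    unfolding Wt_def GW_def gpaths_def by (intro sum.cong) auto
  also have "\<dots> = (\<Sum>y0\<in>edges GY. \<Sum>es\<in>{es\<in>GW. es ! 0 = y0}. PY (es ! 0) * Wt es)"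
    by (rule sum.group[OF finGW finEY img, symmetric])
  also have "\<dots> = (\<Sum>y0\<in>edges GY. PY y0 * exY y0 n (\<lambda>q. if map (lab GY) q = w then 1 else 0))"
  proof (intro sum.cong refl)
    fix y0 assume y0: "y0 \<in> edges GY"
    have "exY y0 n (\<lambda>q. if map (lab GY) q = w then 1 else 0) = (\<Sum>es\<in>Gp y0 n. if map (lab GY) es = w then Wt es else 0)"
      unfolding exY_sum[OF y0] by (intro sum.cong) auto
    also have "\<dots> = (\<Sum>es\<in>{es\<in>Gp y0 n. map (lab GY) es = w}. Wt es)"
      by (rule sum.inter_filter[OF Gp_fin, symmetric])
    also have "{es\<in>Gp y0 n. map (lab GY) es = w} = {es\<in>GW. es ! 0 = y0}"
      unfolding Gp_def GW_def using w by auto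
    finally show "(\<Sum>es\<in>{es\<in>GW. es ! 0 = y0}. PY (es ! 0) * Wt es) = PY y0 * exY y0 n (\<lambda>q. if map (lab GY) q = w then 1 else 0)"
      by (simp add: sum_distrib_left)
  qed
  finally show ?thesis .
qed

lemma P_le_PY: "e0 \<in> Ep \<Longrightarrow> P e0 \<le> PY (snd e0)"
proof -
  assume e0: "e0 \<in> Ep"
  have sy: "snd e0 \<in> edges GY" using Ep_E[OF e0] unfolding E_def by auto
  have "P e0 \<le> (\<Sum>e'\<in>{e'\<in>E. snd e' = snd e0}. P e')"
    using finE nn Ep_E[OF e0] by (intro member_le_sum) auto
  also have "\<dots> = PY (snd e0)" by (rule marg[OF sy])
  finally show ?thesis .
qed

lemma joint_le_hmm:
  assumes e0: "e0 \<in> Ep" and w: "length w = Suc n"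
  shows "P e0 * ex e0 n (\<lambda>p. if map (\<lambda>e. lab GY (snd e)) p = w then 1 else 0) \<le> hmm_cyl GY PY w"
proof -
  have sy: "snd e0 \<in> edges GY" using Ep_E[OF e0] unfolding E_def by auto
  define F where "F q = (if map (lab GY) q = w then 1 else 0 :: real)" for q
  have "ex e0 n (\<lambda>p. if map (\<lambda>e. lab GY (snd e)) p = w then 1 else 0) = ex e0 n (\<lambda>p. F (map snd p))"
    unfolding F_def by (simp add: comp_def)
  also have "\<dots> = exY (snd e0) n F" by (rule ex_exY[OF e0])
  finally have eq: "ex e0 n (\<lambda>p. if map (\<lambda>e. lab GY (snd e)) p = w then 1 else 0) = exY (snd e0) n F" .
  have Fnn: "\<And>y0. y0 \<in> edges GY \<Longrightarrow> exY y0 n F \<ge> 0" by (rule exY_nn) (auto simp: F_def)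
  have "P e0 * exY (snd e0) n F \<le> PY (snd e0) * exY (snd e0) n F"
    using P_le_PY[OF e0] Fnn[OF sy] by (rule mult_right_mono)
  also have "\<dots> \<le> (\<Sum>y0\<in>edges GY. PY y0 * exY y0 n F)"
    using sy finEY PY_nn Fnn by (intro member_le_sum[where f="\<lambda>y0. PY y0 * exY y0 n F"]) auto
  also have "\<dots> = hmm_cyl GY PY w" unfolding hmm_eq[OF w] F_def ..
  finally show ?thesis unfolding eq .
qed

lemma joint_le_marg:
  assumes e0: "e0 \<in> Ep"
  shows "P e0 * ex e0 n (\<lambda>p. if map (\<lambda>e. lab GY (snd e)) p \<in> OK then 1 else 0)
         \<le> (\<Sum>w\<in>{w\<in>OK. length w = Suc n}. hmm_cyl GY PY w)"
proof -
  define OKn where "OKn = {w\<in>OK. length w = Suc n}"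
  have fin: "finite OKn" unfolding OKn_def
    using finite_lists_length_eq[of "UNIV :: 'a set" "Suc n"] by (rule finite_subset[rotated]) auto
  have "ex e0 n (\<lambda>p. if map (\<lambda>e. lab GY (snd e)) p \<in> OK then 1 else 0)
        = ex e0 n (\<lambda>p. \<Sum>w\<in>OKn. if map (\<lambda>e. lab GY (snd e)) p = w then 1 else 0)"
  proof (rule ex_cong[OF _ e0])
    fix p assume p: "p \<in> reach e0 n"
    have "length (map (\<lambda>e. lab GY (snd e)) p) = Suc n" using reach_len[OF p] by simp
    then show "(if map (\<lambda>e. lab GY (snd e)) p \<in> OK then 1 else 0)
          = (\<Sum>w\<in>OKn. if map (\<lambda>e. lab GY (snd e)) p = w then 1 else (0::real))"
      unfolding OKn_def using sum.delta[OF fin, of "map (\<lambda>e. lab GY (snd e)) p" "\<lambda>_. 1::real"]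
      by (simp add: OKn_def eq_commute[of _ "map _ p"])
  qed
  also have "\<dots> = (\<Sum>w\<in>OKn. ex e0 n (\<lambda>p. if map (\<lambda>e. lab GY (snd e)) p = w then 1 else 0))"
    by (rule ex_sum[OF fin])
  finally have "P e0 * ex e0 n (\<lambda>p. if map (\<lambda>e. lab GY (snd e)) p \<in> OK then 1 else 0)
       = (\<Sum>w\<in>OKn. P e0 * ex e0 n (\<lambda>p. if map (\<lambda>e. lab GY (snd e)) p = w then 1 else 0))"
    by (simp add: sum_distrib_left)
  also have "\<dots> \<le> (\<Sum>w\<in>OKn. hmm_cyl GY PY w)"
    by (rule sum_mono, rule joint_le_hmm[OF e0]) (simp add: OKn_def)
  finally show ?thesis unfolding OKn_def .
qed

end


lemma Bn_tl:
  assumes "x \<in> Bn X (Suc n)" shows "tl x \<in> Bn X n"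
proof -
  obtain z k where z: "z \<in> X" "x = map (\<lambda>i. z (k + int i)) [0..<Suc n]" using assms unfolding Bn_def by auto
  have "tl x = map (\<lambda>i. z ((k + 1) + int i)) [0..<n]"
    unfolding z(2) map_upt_Suc by (simp add: algebra_simps)
  then show ?thesis unfolding Bn_def using z(1) by auto
qed

lemma Bn_cons:
  assumes "x \<in> Bn X n" shows "\<exists>a. a # x \<in> Bn X (Suc n)"
proof -
  obtain z k where z: "z \<in> X" "x = map (\<lambda>i. z (k + int i)) [0..<n]" using assms unfolding Bn_def by auto
  have "z (k - 1) # x = map (\<lambda>i. z ((k - 1) + int i)) [0..<Suc n]"
    unfolding z(2) map_upt_Suc by (simp add: algebra_simps)
  then have "z (k - 1) # x \<in> Bn X (Suc n)" unfolding Bn_def using z(1) by auto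
  then show ?thesis by blast
qed

lemma Bn_len: "x \<in> Bn X n \<Longrightarrow> length x = n"
  unfolding Bn_def by auto

lemma hamming_le_len: "hamming u v \<le> length u"
proof -
  have "{i. i < length u \<and> u ! i \<noteq> v ! i} \<subseteq> {..<length u}" by auto
  then show ?thesis unfolding hamming_def using card_mono[of "{..<length u}"] by fastforce
qed

lemma hamming_tl:
  assumes "length u = Suc n" "length v = Suc n"
  shows "hamming (tl u) (tl v) \<le> hamming u v"
proof -
  have "Suc ` {i. i < length (tl u) \<and> tl u ! i \<noteq> tl v ! i} \<subseteq> {i. i < length u \<and> u ! i \<noteq> v ! i}"
    using assms by (cases u; cases v) auto
  then have "card (Suc ` {i. i < length (tl u) \<and> tl u ! i \<noteq> tl v ! i}) \<le> card {i. i < length u \<and> u ! i \<noteq> v ! i}"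
    by (rule card_mono[rotated]) auto
  then show ?thesis unfolding hamming_def by (simp add: card_image)
qed

lemma hamming_cons:
  assumes "length u = length v"
  shows "hamming (a # u) (b # v) \<le> hamming u v + 1"
proof -
  have "{i. i < length (a # u) \<and> (a # u) ! i \<noteq> (b # v) ! i} \<subseteq> insert 0 (Suc ` {i. i < length u \<and> u ! i \<noteq> v ! i})"
  proof
    fix x assume "x \<in> {i. i < length (a # u) \<and> (a # u) ! i \<noteq> (b # v) ! i}"
    then show "x \<in> insert 0 (Suc ` {i. i < length u \<and> u ! i \<noteq> v ! i})" by (cases x) auto
  qed
  then have "card {i. i < length (a # u) \<and> (a # u) ! i \<noteq> (b # v) ! i} \<le> card (insert 0 (Suc ` {i. i < length u \<and> u ! i \<noteq> v ! i}))"
    by (rule card_mono[rotated]) auto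
  also have "\<dots> \<le> card (Suc ` {i. i < length u \<and> u ! i \<noteq> v ! i}) + 1"
    by (simp add: card_insert_le_m1 card_insert_if)
  also have "\<dots> = hamming u v + 1" unfolding hamming_def by (simp add: card_image)
  finally show ?thesis unfolding hamming_def .
qed

lemma word_at_Suc: "word_at y (Suc n) = y 0 # word_at (shift y) n"
  unfolding word_at_def shift_def map_upt_Suc by (simp add: algebra_simps)

lemma word_at_take: "m \<le> n \<Longrightarrow> word_at y m = take m (word_at y n)"
  unfolding word_at_def by (simp add: take_map)

context mbs
begin

lemma Ep_ne: "\<exists>e0. e0 \<in> Ep"
proof (rule ccontr)
  assume "\<not> ?thesis"
  then have "\<And>e. e \<in> E \<Longrightarrow> P e = 0" using P_zero by blast
  then have "(\<Sum>e\<in>E. P e) = 0" by simp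
  then show False using sum1 by simp
qed

lemma reach_take: "p \<in> reach e0 n \<Longrightarrow> j \<le> n \<Longrightarrow> take (Suc j) p \<in> reach e0 j"
  unfolding reach_def by (auto dest: in_set_takeD)

lemma X_word:
  assumes p: "p \<in> reach e0 n"
  shows "map (\<lambda>e. lab GX (fst e)) p \<in> Bn (presented GX) (Suc n)"
proof -
  have len: "length p = Suc n" by (rule reach_len[OF p])
  have ch: "\<And>i. Suc i < length p \<Longrightarrow> tg (p ! i) = sg (p ! Suc i)" using p unfolding reach_def by auto
  have sub: "set p \<subseteq> Ep" using p unfolding reach_def by auto
  have pne: "p \<noteq> []" using len by auto
  obtain q where q: "\<forall>i. q i \<in> Ep" "\<forall>i. tg (q i) = sg (q (i + 1))" "\<forall>i<length p. q (int i) = p ! i"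
    using ext_path[of Ep sg tg p, OF Ep_succ Ep_pred pne sub ch] by blast
  define px where "px i = fst (q i)" for i
  have "\<forall>i. px i \<in> edges GX"
  proof
    fix i
    have "q i \<in> E" using q(1) Ep_E by blast
    then show "px i \<in> edges GX" unfolding px_def E_def by (simp add: mem_Times_iff)
  qed
  moreover have "\<forall>i. tgt GX (px i) = src GX (px (i + 1))"
    using q(2) unfolding px_def tg_def sg_def by auto
  ultimately have "map (\<lambda>i. lab GX (px (int i))) [0..<Suc n] \<in> Bn (presented GX) (Suc n)"
    by (rule Bn_of_path)
  moreover have "map (\<lambda>i. lab GX (px (int i))) [0..<Suc n] = map (\<lambda>e. lab GX (fst e)) p"
  proof (rule nth_equalityI)
    show "length (map (\<lambda>i. lab GX (px (int i))) [0..<Suc n]) = length (map (\<lambda>e. lab GX (fst e)) p)" using len by simp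
    fix i assume "i < length (map (\<lambda>i. lab GX (px (int i))) [0..<Suc n])"
    then have i: "i < Suc n" by simp
    then show "map (\<lambda>i. lab GX (px (int i))) [0..<Suc n] ! i = map (\<lambda>e. lab GX (fst e)) p ! i"
      using q(3) len unfolding px_def by (simp del: upt_Suc)
  qed
  ultimately show ?thesis by simp
qed

lemma BnX0: "[] \<in> Bn (presented GX) 0"
proof -
  obtain e0 where e0: "e0 \<in> Ep" using Ep_ne by blast
  have "map (\<lambda>e. lab GX (fst e)) [e0] \<in> Bn (presented GX) 1" using X_word[OF reach0[OF e0]] by simp
  from Bn_tl[of _ _ 0, OF this[simplified]] show ?thesis by simp
qed

lemma BnX_ne: "Bn (presented GX) n \<noteq> {}"
proof (induction n)
  case 0
  then show ?case using BnX0 by auto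
next
  case (Suc n)
  then obtain x where "x \<in> Bn (presented GX) n" by auto
  then show ?case using Bn_cons[of x] by auto
qed

lemma hamming_Sp:
  "real (hamming (map (\<lambda>e. lab GX (fst e)) p) (map (\<lambda>e. lab GY (snd e)) p)) = Sp p"
proof -
  have "real (hamming (map (\<lambda>e. lab GX (fst e)) p) (map (\<lambda>e. lab GY (snd e)) p))
        = (\<Sum>i\<in>{i\<in>{..<length p}. lab GX (fst (p ! i)) \<noteq> lab GY (snd (p ! i))}. 1)"
    unfolding hamming_def real_of_card by (intro sum.cong) auto
  also have "\<dots> = (\<Sum>i<length p. if lab GX (fst (p ! i)) \<noteq> lab GY (snd (p ! i)) then 1 else 0)"
    by (rule sum.inter_filter) simp
  also have "\<dots> = Sp p" unfolding Sp_def fM_def ..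
  finally show ?thesis .
qed

lemma PY_zero_or_pos: "f \<in> edges GY \<Longrightarrow> PY f = 0 \<or> PY f > 0"
  using PY_nn by force

lemma Y_support:
  assumes w: "length w = Suc n" and nz: "hmm_cyl GY PY w \<noteq> 0"
  shows "w \<in> Bn (presented GY) (Suc n)"
proof -
  define EpY where "EpY = {f\<in>edges GY. PY f > 0}"
  have consY: "\<And>v. v \<in> verts GY \<Longrightarrow> (\<Sum>e\<in>{e\<in>edges GY. src GY e = v}. PY e) = (\<Sum>e\<in>{e\<in>edges GY. tgt GY e = v}. PY e)"
    using stY unfolding stationary_mc_def by auto
  have stv: "\<And>e. e \<in> edges GY \<Longrightarrow> src GY e \<in> verts GY \<and> tgt GY e \<in> verts GY"
    using wfY unfolding wf_lgraph_def by auto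
  have succ: "\<And>e. e \<in> EpY \<Longrightarrow> \<exists>e'\<in>EpY. src GY e' = tgt GY e"
    unfolding EpY_def using flow_succ_pred(1)[OF finEY stv PY_nn consY] by auto
  have pred: "\<And>e. e \<in> EpY \<Longrightarrow> \<exists>e'\<in>EpY. tgt GY e' = src GY e"
    unfolding EpY_def using flow_succ_pred(2)[OF finEY stv PY_nn consY] by auto
  define GW where "GW = {es\<in>gpaths GY (length w). map (lab GY) es = w}"
  have wne: "w \<noteq> []" using w by auto
  have "(\<Sum>es\<in>GW. PY (es ! 0) * (\<Prod>i\<in>{1..<length w}. mc_Q GY PY (es ! i))) \<noteq> 0"
    using nz wne unfolding hmm_cyl_def GW_def by simp
  then obtain es where es: "es \<in> GW" and nz2: "PY (es ! 0) * (\<Prod>i\<in>{1..<length w}. mc_Q GY PY (es ! i)) \<noteq> 0"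
    by (meson sum.neutral)
  have les: "length es = length w" and sub: "set es \<subseteq> edges GY" and lab: "map (lab GY) es = w"
    and ch: "\<And>i. Suc i < length es \<Longrightarrow> tgt GY (es ! i) = src GY (es ! Suc i)"
    using es unfolding GW_def gpaths_def by auto
  have inE: "\<And>i. i < length es \<Longrightarrow> es ! i \<in> edges GY" using sub nth_mem by blast
  have "es ! i \<in> EpY" if i: "i < length es" for i
  proof (cases "i = 0")
    case True
    have "PY (es ! 0) \<noteq> 0" using nz2 by auto
    then show ?thesis using True inE[OF i] PY_zero_or_pos unfolding EpY_def by auto
  next
    case False
    then have "i \<in> {1..<length w}" using i les by auto
    then have "mc_Q GY PY (es ! i) \<noteq> 0" using nz2 by auto
    then have "PY (es ! i) \<noteq> 0" unfolding mc_Q_def by auto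
    then show ?thesis using inE[OF i] PY_zero_or_pos unfolding EpY_def by auto
  qed
  then have subp: "set es \<subseteq> EpY" by (auto simp: in_set_conv_nth)
  have esne: "es \<noteq> []" using les wne by auto
  obtain q where q: "\<forall>i. q i \<in> EpY" "\<forall>i. tgt GY (q i) = src GY (q (i + 1))" "\<forall>i<length es. q (int i) = es ! i"
    using ext_path[of EpY "src GY" "tgt GY" es, OF succ pred esne subp ch] by auto
  have "\<forall>i. q i \<in> edges GY" using q(1) unfolding EpY_def by auto
  then have "map (\<lambda>i. lab GY (q (int i))) [0..<Suc n] \<in> Bn (presented GY) (Suc n)"
    using q(2) by (rule Bn_of_path)
  moreover have "map (\<lambda>i. lab GY (q (int i))) [0..<Suc n] = w"
  proof (rule nth_equalityI)
    show "length (map (\<lambda>i. lab GY (q (int i))) [0..<Suc n]) = length w" using w by simp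
    fix i assume "i < length (map (\<lambda>i. lab GY (q (int i))) [0..<Suc n])"
    then have i: "i < Suc n" by simp
    then show "map (\<lambda>i. lab GY (q (int i))) [0..<Suc n] ! i = w ! i"
    proof -
      have "w ! i = lab GY (es ! i)" using i les w unfolding lab[symmetric] by simp
      then show ?thesis using q(3) i les w by (simp del: upt_Suc)
    qed
  qed
  ultimately show ?thesis by simp
qed

lemma hmm_nn: "hmm_cyl GY PY w \<ge> 0"
  unfolding hmm_cyl_def using PY_nn mcQ_nn
  by (auto intro!: sum_nonneg mult_nonneg_nonneg prod_nonneg simp: gpaths_def nth_mem subset_iff)

end


context mbs
begin

definition Good :: "nat \<Rightarrow> real \<Rightarrow> 'a list set" where
  "Good n T = {w. \<exists>x\<in>Bn (presented GX) n. real (hamming x w) \<le> T}"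

lemma Good_mono: assumes "T \<le> T'" shows "Good n T \<subseteq> Good n T'"
proof
  fix w assume "w \<in> Good n T"
  then obtain x where x: "x \<in> Bn (presented GX) n" "real (hamming x w) \<le> T" unfolding Good_def by blast
  then have "real (hamming x w) \<le> T'" using assms by linarith
  then show "w \<in> Good n T'" unfolding Good_def using x(1) by blast
qed

lemma Good0: assumes "T \<ge> 0" shows "[] \<in> Good 0 T"
proof -
  have "real (hamming [] []) \<le> T" using \<open>T \<ge> 0\<close> by (simp add: hamming_def)
  then show ?thesis unfolding Good_def using BnX0 by blast
qed

lemma len_word_at: "length (word_at y n) = n"
  unfolding word_at_def by simp

lemma Good_shift1:
  assumes "word_at y (Suc n) \<in> Good (Suc n) T" shows "word_at (shift y) n \<in> Good n T"
proof -
  obtain x where x: "x \<in> Bn (presented GX) (Suc n)" "real (hamming x (word_at y (Suc n))) \<le> T"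
    using assms unfolding Good_def by auto
  have "tl x \<in> Bn (presented GX) n" using x(1) by (rule Bn_tl)
  moreover have "hamming (tl x) (tl (word_at y (Suc n))) \<le> hamming x (word_at y (Suc n))"
    by (rule hamming_tl) (simp_all add: Bn_len[OF x(1)] len_word_at)
  moreover have "tl (word_at y (Suc n)) = word_at (shift y) n" unfolding word_at_Suc by simp
  ultimately show ?thesis unfolding Good_def using x(2) by (intro CollectI bexI[of _ "tl x"]) auto
qed

lemma Good_shift2:
  assumes "word_at (shift y) n \<in> Good n T" shows "word_at y (Suc n) \<in> Good (Suc n) (T + 1)"
proof -
  obtain x where x: "x \<in> Bn (presented GX) n" "real (hamming x (word_at (shift y) n)) \<le> T"
    using assms unfolding Good_def by auto
  obtain a where a: "a # x \<in> Bn (presented GX) (Suc n)" using Bn_cons[OF x(1)] by blast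
  have "hamming (a # x) (y 0 # word_at (shift y) n) \<le> hamming x (word_at (shift y) n) + 1"
    by (rule hamming_cons) (simp add: Bn_len[OF x(1)] len_word_at)
  then have "real (hamming (a # x) (word_at y (Suc n))) \<le> T + 1"
    unfolding word_at_Suc using x(2) by linarith
  then show ?thesis unfolding Good_def using a by blast
qed

definition tk :: "nat \<Rightarrow> real" where "tk k = cval + 1 / (real k + 1)"

lemma tk_nn: "tk k \<ge> 0" unfolding tk_def using cval_nn by simp

lemma tk_mono: "tk (Suc k) \<le> tk k"
  unfolding tk_def by (simp add: frac_le)

definition Vs :: "nat \<Rightarrow> nat \<Rightarrow> (int \<Rightarrow> 'a) set" where
  "Vs k A = {y. \<forall>n. word_at y n \<in> Good n (real n * tk k + real A)}"

definition Gk :: "nat \<Rightarrow> (int \<Rightarrow> 'a) set" where "Gk k = (\<Union>A. Vs k A)"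

definition GG :: "(int \<Rightarrow> 'a) set" where "GG = (\<Inter>k. Gk k)"

lemma Vs_shift1: "y \<in> Vs k A \<Longrightarrow> shift y \<in> Vs k (A + nat \<lceil>tk k\<rceil>)"
proof -
  assume y: "y \<in> Vs k A"
  have t: "tk k \<le> real (nat \<lceil>tk k\<rceil>)" using tk_nn by linarith
  show ?thesis unfolding Vs_def
  proof (intro CollectI allI)
    fix n
    have "word_at y (Suc n) \<in> Good (Suc n) (real (Suc n) * tk k + real A)" using y unfolding Vs_def by blast
    then have "word_at (shift y) n \<in> Good n (real (Suc n) * tk k + real A)" by (rule Good_shift1)
    moreover have "real (Suc n) * tk k + real A \<le> real n * tk k + real (A + nat \<lceil>tk k\<rceil>)"
      using t by (simp add: algebra_simps)
    ultimately show "word_at (shift y) n \<in> Good n (real n * tk k + real (A + nat \<lceil>tk k\<rceil>))"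
      using Good_mono by blast
  qed
qed

lemma Vs_shift2: "shift y \<in> Vs k A \<Longrightarrow> y \<in> Vs k (A + 1)"
proof -
  assume y: "shift y \<in> Vs k A"
  show ?thesis unfolding Vs_def
  proof (intro CollectI allI)
    fix n
    show "word_at y n \<in> Good n (real n * tk k + real (A + 1))"
    proof (cases n)
      case 0
      have "word_at y 0 = []" unfolding word_at_def by simp
      then show ?thesis using 0 Good0[of "real (A + 1)"] by simp
    next
      case (Suc m)
      have "word_at (shift y) m \<in> Good m (real m * tk k + real A)" using y unfolding Vs_def by blast
      then have "word_at y (Suc m) \<in> Good (Suc m) (real m * tk k + real A + 1)" by (rule Good_shift2)
      moreover have "real m * tk k + real A + 1 \<le> real (Suc m) * tk k + real (A + 1)"
        using tk_nn[of k] by (simp add: algebra_simps)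
      ultimately show ?thesis using Suc Good_mono by blast
    qed
  qed
qed

lemma GG_shift: "shift y \<in> GG \<longleftrightarrow> y \<in> GG"
proof
  assume a: "shift y \<in> GG"
  show "y \<in> GG" unfolding GG_def Gk_def
  proof (rule INT_I)
    fix k
    obtain A where "shift y \<in> Vs k A" using a unfolding GG_def Gk_def by blast
    then have "y \<in> Vs k (A + 1)" by (rule Vs_shift2)
    then show "y \<in> (\<Union>A. Vs k A)" by blast
  qed
next
  assume a: "y \<in> GG"
  show "shift y \<in> GG" unfolding GG_def Gk_def
  proof (rule INT_I)
    fix k
    obtain A where "y \<in> Vs k A" using a unfolding GG_def Gk_def by blast
    then have "shift y \<in> Vs k (A + nat \<lceil>tk k\<rceil>)" by (rule Vs_shift1)
    then show "shift y \<in> (\<Union>A. Vs k A)" by blast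
  qed
qed

lemma Vs_eq: "Vs k A = (\<Inter>n. {y. word_at y n \<in> Good n (real n * tk k + real A)})"
  unfolding Vs_def by auto

lemma sets_Vs: "Vs k A \<in> sets seq_space"
  unfolding Vs_eq by (rule sets.countable_INT) (auto intro: sets_word)

lemma sets_Gk: "Gk k \<in> sets seq_space"
  unfolding Gk_def using sets_Vs by (intro sets.countable_UN) auto

lemma sets_GG: "GG \<in> sets seq_space"
  unfolding GG_def using sets_Gk by (intro sets.countable_INT) auto

lemma Vs_mono_k: "Vs (Suc k) A \<subseteq> Vs k A"
proof
  fix y assume "y \<in> Vs (Suc k) A"
  then have "\<And>n. word_at y n \<in> Good n (real n * tk (Suc k) + real A)" unfolding Vs_def by blast
  moreover have "\<And>n. real n * tk (Suc k) + real A \<le> real n * tk k + real A"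
    using tk_mono by (simp add: mult_left_mono)
  ultimately show "y \<in> Vs k A" unfolding Vs_def using Good_mono by blast
qed

lemma Vs_mono_A: "Vs k A \<subseteq> Vs k (Suc A)"
proof
  fix y assume "y \<in> Vs k A"
  then have "\<And>n. word_at y n \<in> Good n (real n * tk k + real A)" unfolding Vs_def by blast
  moreover have "\<And>n. Good n (real n * tk k + real A) \<subseteq> Good n (real n * tk k + real (Suc A))"
    by (rule Good_mono) simp
  ultimately show "y \<in> Vs k (Suc A)" unfolding Vs_def by blast
qed

lemma Gk_mono: "Gk (Suc k) \<subseteq> Gk k"
  unfolding Gk_def using Vs_mono_k by blast

end


locale mbs_mu = mbs GX GY PY P for GX :: "('v,'e,'a::finite) lgraph" and GY :: "('w,'f,'a) lgraph" and PY P +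
  fixes \<mu> :: "(int \<Rightarrow> 'a) measure"
  assumes hmm: "hidden_markov_measure GY PY \<mu>" and erg: "ergodic \<mu>"
begin

lemma sp: "space \<mu> = UNIV" and st: "sets \<mu> = sets seq_space" and ps: "prob_space \<mu>"
  using hmm_space[OF hmm] by auto

interpretation prob_space \<mu> by (rule ps)

lemma meas_word: "measure \<mu> {y. word_at y n \<in> W} = (\<Sum>w\<in>{w\<in>W. length w = n}. hmm_cyl GY PY w)"
  using marginal_sum[OF hmm, of n W] unfolding marginal_def sp by simp

lemma Gk_lower:
  assumes e0: "e0 \<in> Ep" and Zc: "Z e0 \<le> cval"
  shows "measure \<mu> (Gk k) \<ge> P e0"
proof -
  define s where "s = 1 / (real k + 1)"
  have s0: "s > 0" unfolding s_def by simp
  have tks: "tk k = cval + s" unfolding tk_def s_def ..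
  obtain C A0 where C0: "C \<ge> 0" and CA: "\<And>A N. A \<ge> A0 \<Longrightarrow> ex e0 N (\<lambda>p. if (\<forall>j\<le>N. Sp (take (Suc j) p) \<le> real (Suc j) * (cval + s) + real A) then 1 else 0) \<ge> 1 - C / real A"
    using good_prob[OF e0 Zc s0] by blast
  have P0: "P e0 > 0" using e0 unfolding Ep_def by simp
  have VsA: "measure \<mu> (Vs k A) \<ge> P e0 * (1 - C / real A)" if A: "A \<ge> A0" for A
  proof -
    define U where "U N = {y. \<forall>n\<le>Suc N. word_at y n \<in> Good n (real n * tk k + real A)}" for N
    have U_ge: "measure \<mu> (U N) \<ge> P e0 * (1 - C / real A)" for N
    proof -
      define OK where "OK = {w. \<forall>n\<le>Suc N. take n w \<in> Good n (real n * tk k + real A)}"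
      have "U N = {y. word_at y (Suc N) \<in> OK}"
      proof (rule set_eqI)
        fix y :: "int \<Rightarrow> 'a"
        have tk: "\<And>n. n \<le> Suc N \<Longrightarrow> take n (word_at y (Suc N)) = word_at y n"
          using word_at_take by metis
        show "y \<in> U N \<longleftrightarrow> y \<in> {y. word_at y (Suc N) \<in> OK}"
          unfolding U_def OK_def using tk by simp
      qed
      then have "measure \<mu> (U N) = (\<Sum>w\<in>{w\<in>OK. length w = Suc N}. hmm_cyl GY PY w)"
        using meas_word by simp
      also have "\<dots> \<ge> P e0 * ex e0 N (\<lambda>p. if map (\<lambda>e. lab GY (snd e)) p \<in> OK then 1 else 0)"
        by (rule joint_le_marg[OF e0])
      also have "ex e0 N (\<lambda>p. if map (\<lambda>e. lab GY (snd e)) p \<in> OK then 1 else 0)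
          \<ge> ex e0 N (\<lambda>p. if (\<forall>j\<le>N. Sp (take (Suc j) p) \<le> real (Suc j) * (cval + s) + real A) then 1 else 0)"
      proof (rule ex_mono[OF _ e0])
        fix p assume p: "p \<in> reach e0 N"
        show "(if (\<forall>j\<le>N. Sp (take (Suc j) p) \<le> real (Suc j) * (cval + s) + real A) then 1 else 0)
              \<le> (if map (\<lambda>e. lab GY (snd e)) p \<in> OK then 1 else (0::real))"
        proof (cases "\<forall>j\<le>N. Sp (take (Suc j) p) \<le> real (Suc j) * (cval + s) + real A")
          case True
          have "map (\<lambda>e. lab GY (snd e)) p \<in> OK" unfolding OK_def
          proof (intro CollectI allI impI)
            fix n assume n: "n \<le> Suc N"
            show "take n (map (\<lambda>e. lab GY (snd e)) p) \<in> Good n (real n * tk k + real A)"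
            proof (cases n)
              case 0
              then show ?thesis using Good0[of "real 0 * tk k + real A"] by simp
            next
              case (Suc j)
              then have j: "j \<le> N" using n by simp
              define q where "q = take (Suc j) p"
              have q: "q \<in> reach e0 j" unfolding q_def by (rule reach_take[OF p j])
              have xw: "map (\<lambda>e. lab GX (fst e)) q \<in> Bn (presented GX) (Suc j)" by (rule X_word[OF q])
              have "real (hamming (map (\<lambda>e. lab GX (fst e)) q) (map (\<lambda>e. lab GY (snd e)) q)) = Sp q"
                by (rule hamming_Sp)
              also have "\<dots> \<le> real (Suc j) * tk k + real A" using True j unfolding q_def tks by blast
              finally have "map (\<lambda>e. lab GY (snd e)) q \<in> Good (Suc j) (real (Suc j) * tk k + real A)"
                unfolding Good_def using xw by blast
              then show ?thesis unfolding Suc q_def by (simp add: take_map)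
            qed
          qed
          then show ?thesis using True by simp
        next
          case False
          then show ?thesis by auto
        qed
      qed
      then have "P e0 * ex e0 N (\<lambda>p. if map (\<lambda>e. lab GY (snd e)) p \<in> OK then 1 else 0)
          \<ge> P e0 * ex e0 N (\<lambda>p. if (\<forall>j\<le>N. Sp (take (Suc j) p) \<le> real (Suc j) * (cval + s) + real A) then 1 else 0)"
        using P0 by (intro mult_left_mono) auto
      also have "P e0 * ex e0 N (\<lambda>p. if (\<forall>j\<le>N. Sp (take (Suc j) p) \<le> real (Suc j) * (cval + s) + real A) then 1 else 0)
           \<ge> P e0 * (1 - C / real A)"
        using CA[OF A, of N] P0 by (intro mult_left_mono) auto
      finally show ?thesis .
    qed
    have "(\<lambda>N. measure \<mu> (U N)) \<longlonglongrightarrow> measure \<mu> (\<Inter>N. U N)"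
    proof (rule finite_Lim_measure_decseq)
      show "range U \<subseteq> sets \<mu>"
      proof
        fix X assume "X \<in> range U"
        then obtain N where X: "X = U N" by blast
        have "U N = (\<Inter>n\<in>{..Suc N}. {y. word_at y n \<in> Good n (real n * tk k + real A)})"
          unfolding U_def by auto
        also have "\<dots> \<in> sets seq_space" by (rule sets.finite_INT) (auto intro: sets_word)
        finally show "X \<in> sets \<mu>" unfolding X st .
      qed
      show "decseq U" unfolding U_def by (intro decseq_SucI) auto
    qed
    moreover have "(\<Inter>N. U N) = Vs k A"
    proof (rule set_eqI, rule iffI)
      fix y assume y: "y \<in> (\<Inter>N. U N)"
      show "y \<in> Vs k A" unfolding Vs_def
      proof (intro CollectI allI)
        fix n
        have "y \<in> U n" using y by blast
        then show "word_at y n \<in> Good n (real n * tk k + real A)" unfolding U_def by simp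
      qed
    next
      fix y assume "y \<in> Vs k A"
      then show "y \<in> (\<Inter>N. U N)" unfolding U_def Vs_def by simp
    qed
    ultimately have "(\<lambda>N. measure \<mu> (U N)) \<longlonglongrightarrow> measure \<mu> (Vs k A)" by simp
    then show ?thesis using U_ge by (intro LIMSEQ_le_const) auto
  qed
  have GkA: "measure \<mu> (Gk k) \<ge> P e0 * (1 - C / real A)" if A: "A \<ge> A0" for A
  proof -
    have "measure \<mu> (Vs k A) \<le> measure \<mu> (Gk k)"
    proof (rule finite_measure_mono)
      show "Vs k A \<subseteq> Gk k" unfolding Gk_def by blast
      show "Gk k \<in> sets \<mu>" unfolding st by (rule sets_Gk)
    qed
    then show ?thesis using VsA[OF A] by linarith
  qed
  show ?thesis
  proof (rule ccontr)
    assume "\<not> ?thesis"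
    then have d: "P e0 - measure \<mu> (Gk k) > 0" by simp
    define A where "A = max A0 (nat \<lceil>P e0 * C / (P e0 - measure \<mu> (Gk k))\<rceil> + 1)"
    have AA: "A \<ge> A0" unfolding A_def by simp
    have Apos: "real A > P e0 * C / (P e0 - measure \<mu> (Gk k))" unfolding A_def by linarith
    have A0': "real A > 0" unfolding A_def by simp
    have "P e0 * C / real A < P e0 - measure \<mu> (Gk k)"
      using Apos A0' d by (simp add: divide_less_eq mult.commute pos_divide_less_eq)
    then have "P e0 * (1 - C / real A) > measure \<mu> (Gk k)" by (simp add: algebra_simps)
    then show False using GkA[OF AA] by linarith
  qed
qed

end


context mbs_mu
begin

interpretation prob_space \<mu> by (rule ps)

lemma e0_ex: "\<exists>e0\<in>Ep. Z e0 \<le> cval"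
proof (rule ccontr)
  assume "\<not> ?thesis"
  then have gt: "\<And>e. e \<in> Ep \<Longrightarrow> Z e > cval" by force
  obtain e1 where e1: "e1 \<in> Ep" using Ep_ne by blast
  have "(\<Sum>e\<in>Ep. P e * cval) < (\<Sum>e\<in>Ep. P e * Z e)"
  proof (rule sum_strict_mono[OF finEp])
    show "Ep \<noteq> {}" using e1 by blast
    fix e assume e: "e \<in> Ep"
    have "P e > 0" using e unfolding Ep_def by simp
    then show "P e * cval < P e * Z e" using gt[OF e] by (rule mult_strict_left_mono[rotated])
  qed
  also have "\<dots> = cval" by (rule sum_PZ)
  also have "(\<Sum>e\<in>Ep. P e * cval) = cval"
  proof -
    have "(\<Sum>e\<in>Ep. P e) = (\<Sum>e\<in>{e\<in>Ep. True}. P e)" by simp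
    also have "\<dots> = (\<Sum>e\<in>{e\<in>E. True}. P e)" by (rule sum_Ep1)
    finally have "(\<Sum>e\<in>Ep. P e) = 1" using sum1 by simp
    then show ?thesis by (simp add: sum_distrib_right[symmetric])
  qed
  finally show False by simp
qed

lemma GG_lower: "measure \<mu> GG > 0"
proof -
  obtain e0 where e0: "e0 \<in> Ep" "Z e0 \<le> cval" using e0_ex by blast
  have "(\<lambda>k. measure \<mu> (Gk k)) \<longlonglongrightarrow> measure \<mu> (\<Inter>k. Gk k)"
  proof (rule finite_Lim_measure_decseq)
    show "range Gk \<subseteq> sets \<mu>" using sets_Gk unfolding st by auto
    show "decseq Gk" using Gk_mono by (intro decseq_SucI) auto
  qed
  then have "P e0 \<le> measure \<mu> GG" unfolding GG_def
    using Gk_lower[OF e0] by (intro LIMSEQ_le_const) auto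
  moreover have "P e0 > 0" using e0 unfolding Ep_def by simp
  ultimately show ?thesis by linarith
qed

lemma GG_one: "measure \<mu> GG = 1"
proof -
  have "GG \<in> sets \<mu>" unfolding st by (rule sets_GG)
  moreover have "shift -` GG \<inter> space \<mu> = GG" unfolding sp using GG_shift by auto
  ultimately have "measure \<mu> GG = 0 \<or> measure \<mu> GG = 1" using erg unfolding ergodic_def by blast
  then show ?thesis using GG_lower by auto
qed

lemma marg_BnY:
  assumes n: "n > 0"
  shows "marginal \<mu> n (Bn (presented GY) n \<inter> W) = marginal \<mu> n W"
proof -
  obtain m where m: "n = Suc m" using n by (cases n) auto
  have "marginal \<mu> n (Bn (presented GY) n \<inter> W) = (\<Sum>w\<in>{w\<in>Bn (presented GY) n \<inter> W. length w = n}. hmm_cyl GY PY w)"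
    by (rule marginal_sum[OF hmm])
  also have "\<dots> = (\<Sum>w\<in>{w\<in>W. length w = n}. hmm_cyl GY PY w)"
  proof (rule sum.mono_neutral_left)
    show "finite {w\<in>W. length w = n}"
      using finite_lists_length_eq[of "UNIV :: 'a set" n] by (rule finite_subset[rotated]) auto
    show "{w\<in>Bn (presented GY) n \<inter> W. length w = n} \<subseteq> {w\<in>W. length w = n}" by auto
    show "\<forall>w\<in>{w\<in>W. length w = n} - {w\<in>Bn (presented GY) n \<inter> W. length w = n}. hmm_cyl GY PY w = 0"
      using Y_support[of _ m] m by auto
  qed
  also have "\<dots> = marginal \<mu> n W" by (rule marginal_sum[OF hmm, symmetric])
  finally show ?thesis .
qed

lemma marg_UNIV: "marginal \<mu> n UNIV = 1"
  unfolding marginal_def sp using prob_space sp by simp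

lemma full_marg:
  assumes n: "n > 0"
  shows "marginal \<mu> n (Bn (presented GY) n \<inter> (\<Union>x\<in>Bn (presented GX) n. hball n x)) = 1"
proof -
  obtain x0 where x0: "x0 \<in> Bn (presented GX) n" using BnX_ne[of n] by blast
  have "{w. length w = n} \<subseteq> (\<Union>x\<in>Bn (presented GX) n. hball n x)"
  proof
    fix w :: "'a list" assume "w \<in> {w. length w = n}"
    then have "w \<in> hball n x0" unfolding hball_def using Bn_len[OF x0] hamming_le_len[of x0 w] by auto
    then show "w \<in> (\<Union>x\<in>Bn (presented GX) n. hball n x)" using x0 by blast
  qed
  have "marginal \<mu> n (Bn (presented GY) n \<inter> (\<Union>x\<in>Bn (presented GX) n. hball n x))
       = marginal \<mu> n (\<Union>x\<in>Bn (presented GX) n. hball n x)" by (rule marg_BnY[OF n])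
  also have "\<dots> = (\<Sum>w\<in>{w\<in>(\<Union>x\<in>Bn (presented GX) n. hball n x). length w = n}. hmm_cyl GY PY w)"
    by (rule marginal_sum[OF hmm])
  also have "{w\<in>(\<Union>x\<in>Bn (presented GX) n. hball n x). length w = n} = {w\<in>UNIV. length w = n}"
    using \<open>{w. length w = n} \<subseteq> _\<close> by auto
  also have "(\<Sum>w\<in>{w\<in>UNIV. length w = n}. hmm_cyl GY PY w) = marginal \<mu> n UNIV"
    by (rule marginal_sum[OF hmm, symmetric])
  finally show ?thesis using marg_UNIV by simp
qed

lemma Reps_mono_all:
  assumes n: "n > 0" and e1: "0 < e1" and e12: "e1 \<le> e2"
  shows "Reps e2 (Bn (presented GX) n) (Bn (presented GY) n) (marginal \<mu> n)
       \<le> Reps e1 (Bn (presented GX) n) (Bn (presented GY) n) (marginal \<mu> n)"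
  by (rule Reps_mono[of _ _ _ n]) (use full_marg[OF n] e1 e12 in auto)

end


context mbs_mu
begin

interpretation prob_space \<mu> by (rule ps)

lemma marg_mono:
  assumes "\<And>w. w \<in> W \<Longrightarrow> length w = n \<Longrightarrow> w \<in> W'"
  shows "marginal \<mu> n W \<le> marginal \<mu> n W'"
  unfolding marginal_def sp
proof (rule finite_measure_mono)
  show "{x \<in> UNIV. word_at x n \<in> W} \<subseteq> {x \<in> UNIV. word_at x n \<in> W'}"
    using assms len_word_at by auto
  show "{x \<in> UNIV. word_at x n \<in> W'} \<in> sets \<mu>" unfolding st using sets_word[of n W'] by simp
qed

lemma R_eps_le:
  assumes eps: "\<epsilon> > 0"
  shows "R_eps (presented GX) (presented GY) \<mu> \<epsilon> \<le> ereal cval"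
proof (rule ereal_le_epsilon2)
  fix \<delta> :: real assume d: "\<delta> > 0"
  define k where "k = nat \<lceil>1 / \<delta>\<rceil>"
  have "real k + 1 > 1 / \<delta>" unfolding k_def by linarith
  then have kd: "1 / (real k + 1) < \<delta>" using d by (simp add: divide_less_eq field_simps)
  have Gk1: "measure \<mu> (Gk k) = 1"
  proof -
    have "measure \<mu> GG \<le> measure \<mu> (Gk k)"
      by (rule finite_measure_mono) (auto simp: GG_def st sets_Gk)
    moreover have "measure \<mu> (Gk k) \<le> 1" by (rule prob_le_1)
    ultimately show ?thesis using GG_one by simp
  qed
  have "(\<lambda>A. measure \<mu> (Vs k A)) \<longlonglongrightarrow> measure \<mu> (\<Union>A. Vs k A)"
  proof (rule finite_Lim_measure_incseq)
    show "range (Vs k) \<subseteq> sets \<mu>" using sets_Vs unfolding st by auto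
    show "incseq (Vs k)" using Vs_mono_A by (intro incseq_SucI) auto
  qed
  then have lim: "(\<lambda>A. measure \<mu> (Vs k A)) \<longlonglongrightarrow> 1" using Gk1 unfolding Gk_def by simp
  have "\<forall>\<^sub>F A in sequentially. measure \<mu> (Vs k A) > 1 - \<epsilon>"
    using order_tendstoD(1)[OF lim] eps by simp
  then obtain A where A: "measure \<mu> (Vs k A) > 1 - \<epsilon>" by (auto simp: eventually_sequentially)
  define T where "T n = real n * tk k + real A" for n
  have T0: "T n \<ge> 0" for n unfolding T_def using tk_nn by simp
  have Rb: "real (Reps \<epsilon> (Bn (presented GX) n) (Bn (presented GY) n) (marginal \<mu> n)) \<le> T n" if n: "n > 0" for n
  proof -
    define r where "r = nat \<lfloor>T n\<rfloor>"
    have "marginal \<mu> n (Good n (T n)) \<ge> measure \<mu> (Vs k A)"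
      unfolding marginal_def sp
    proof (rule finite_measure_mono)
      show "Vs k A \<subseteq> {x \<in> UNIV. word_at x n \<in> Good n (T n)}" unfolding Vs_def T_def by auto
      show "{x \<in> UNIV. word_at x n \<in> Good n (T n)} \<in> sets \<mu>" unfolding st using sets_word[of n] by simp
    qed
    also have "marginal \<mu> n (Good n (T n)) \<le> marginal \<mu> n (\<Union>x\<in>Bn (presented GX) n. hball r x)"
    proof (rule marg_mono)
      fix w assume w: "w \<in> Good n (T n)" "length w = n"
      then obtain x where x: "x \<in> Bn (presented GX) n" "real (hamming x w) \<le> T n" unfolding Good_def by blast
      have "hamming x w \<le> r" unfolding r_def using x(2) T0[of n] by linarith
      then have "w \<in> hball r x" unfolding hball_def using Bn_len[OF x(1)] w(2) by simp
      then show "w \<in> (\<Union>x\<in>Bn (presented GX) n. hball r x)" using x(1) by blast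
    qed
    also have "\<dots> = marginal \<mu> n (Bn (presented GY) n \<inter> (\<Union>x\<in>Bn (presented GX) n. hball r x))"
      by (rule marg_BnY[OF n, symmetric])
    finally have "marginal \<mu> n (Bn (presented GY) n \<inter> (\<Union>x\<in>Bn (presented GX) n. hball r x)) \<ge> 1 - \<epsilon>"
      using A by linarith
    then have "Reps \<epsilon> (Bn (presented GX) n) (Bn (presented GY) n) (marginal \<mu> n) \<le> r" by (rule Reps_le)
    then show ?thesis unfolding r_def using T0[of n] by linarith
  qed
  have "R_eps (presented GX) (presented GY) \<mu> \<epsilon>
        \<le> liminf (\<lambda>n. ereal (tk k + real A / real n))"
    unfolding R_eps_def
  proof (rule Liminf_mono)
    show "\<forall>\<^sub>F n in sequentially. ereal (real (Reps \<epsilon> (Bn (presented GX) n) (Bn (presented GY) n) (marginal \<mu> n)) / real n)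
            \<le> ereal (tk k + real A / real n)"
      using eventually_gt_at_top[of "0::nat"]
    proof eventually_elim
      case (elim n)
      have "real (Reps \<epsilon> (Bn (presented GX) n) (Bn (presented GY) n) (marginal \<mu> n)) / real n \<le> T n / real n"
        using Rb[OF elim] elim by (intro divide_right_mono) auto
      also have "T n / real n = tk k + real A / real n" unfolding T_def using elim by (simp add: field_simps)
      finally show ?case by simp
    qed
  qed
  also have "liminf (\<lambda>n. ereal (tk k + real A / real n)) = ereal (tk k)"
  proof (rule lim_imp_Liminf)
    show "(\<lambda>n. ereal (tk k + real A / real n)) \<longlonglongrightarrow> ereal (tk k)"
    proof -
      have l: "(\<lambda>n. tk k + real A / real n) \<longlonglongrightarrow> tk k + 0"
        by (rule tendsto_add[OF tendsto_const lim_const_over_n])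
      show ?thesis using tendsto_ereal[OF l] by simp
    qed
  qed simp
  also have "ereal (tk k) \<le> ereal cval + ereal \<delta>" unfolding tk_def using kd by simp
  finally show "R_eps (presented GX) (presented GY) \<mu> \<epsilon> \<le> ereal cval + ereal \<delta>" .
qed

lemma R0_le_cval: "R0 (presented GX) (presented GY) \<mu> \<le> ereal cval"
proof (rule R0_le)
  fix e1 e2 :: real assume "0 < e1" "e1 \<le> e2"
  then show "R_eps (presented GX) (presented GY) \<mu> e2 \<le> R_eps (presented GX) (presented GY) \<mu> e1"
    by (intro R_eps_mono Reps_mono_all) auto
next
  fix e :: real assume "0 < e"
  then show "R_eps (presented GX) (presented GY) \<mu> e \<le> ereal cval" by (rule R_eps_le)
qed

end

theorem theorem28:
  fixes GX :: "('v, 'e, 'a::finite) lgraph"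
    and GY :: "('w, 'f, 'a) lgraph"
    and PY :: "'f \<Rightarrow> real"
    and \<mu> :: "(int \<Rightarrow> 'a) measure"
  assumes "wf_lgraph GX" and "wf_lgraph GY"
    and "stationary_mc GY PY"
    and "hidden_markov_measure GY PY \<mu>"
    and "ergodic \<mu>"
  shows "R0 (presented GX) (presented GY) \<mu> \<le> MB GX GY PY"
  unfolding MB_def
proof (rule Inf_greatest)
  fix z assume "z \<in> {ereal (\<Sum>e\<in>{e\<in>edges GX \<times> edges GY. lab GX (fst e) \<noteq> lab GY (snd e)}. P e) | P. MB_feasible GX GY PY P}"
  then obtain P where z: "z = ereal (\<Sum>e\<in>{e\<in>edges GX \<times> edges GY. lab GX (fst e) \<noteq> lab GY (snd e)}. P e)"
    and feas: "MB_feasible GX GY PY P" by blast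
  have "mbs_mu GX GY PY P \<mu>"
    unfolding mbs_mu_def mbs_mu_axioms_def mbs_def using assms feas by blast
  then interpret I: mbs_mu GX GY PY P \<mu> .
  have "R0 (presented GX) (presented GY) \<mu> \<le> ereal I.cval" by (rule I.R0_le_cval)
  also have "I.cval = (\<Sum>e\<in>{e\<in>edges GX \<times> edges GY. lab GX (fst e) \<noteq> lab GY (snd e)}. P e)"
    unfolding I.cval_def I.E_def ..
  finally show "R0 (presented GX) (presented GY) \<mu> \<le> z" unfolding z .
qed


end
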